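(* Let $M=\mathbb{R}/\mathbb{Z}$ with Lebesgue measure $m$, let $f_0:M\to M$ be a $C^2$ local diffeomorphism with a unique saddle-node fixed point $0$ ($f_0(0)=0$, $f_0'(0)=1$, $f_0''(0)>0$), let $B(\{0\})=\{x\in M: f_0^k(x)\to0 \text{ as } k\to\infty\}$, let $W_0$ be the connected component of $B(\{0\})$ containing $0$, and assume $|f_0'(x)|>1$ for all $x\in M\setminus W_0$. Then $m(M\setminus B(\{0\}))=0$. *)

theory Defs
  imports "HOL-Analysis.Analysis"
begin

text \<open>The circle M = R/Z is handled through lifts: a circle map f is represented by a
lift F : R -> R with F(x+1) = F(x) + d, d an integer (the degree). A point of M is
represented by any real representative.\<close>

text \<open>Distance in M = R/Z from the class of x to the point 0, i.e. distance to the
nearest integer.\<close>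
definition circ_dist0 :: "real \<Rightarrow> real" where
  "circ_dist0 x = \<bar>x - of_int (round x)\<bar>"

definition basin0_lift :: "(real \<Rightarrow> real) \<Rightarrow> real set" where
  "basin0_lift F = {x. (\<lambda>k. circ_dist0 ((F ^^ k) x)) \<longlonglongrightarrow> 0}"

definition W0_lift :: "(real \<Rightarrow> real) \<Rightarrow> real set" where
  "W0_lift F = connected_component_set (basin0_lift F) 0"

end

theory Submission imports Defs begin

lemma density_null:
  fixes A Z :: "real set" and \<theta> :: real
  assumes Ab: "A \<in> sets borel" and Zc: "countable Z" and th0: "0 \<le> \<theta>" and th1: "\<theta> < 1"
    and H: "\<And>x r0. x \<in> A \<Longrightarrow> x \<notin> Z \<Longrightarrow> 0 < r0 \<Longrightarrow>
       \<exists>r. 0 < r \<and> r < r0 \<and> emeasure lborel (A \<inter> ball x r) \<le> ennreal \<theta> * emeasure lborel (ball x r)"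
  shows "A \<in> null_sets lborel"
proof -
  have Zn: "Z \<in> null_sets lborel" using Zc by (rule countable_imp_null_set_lborel)
  have Zb: "Z \<in> sets borel" using null_setsD2[OF Zn] by simp
  have local: "A \<inter> ball 0 (real N) \<in> null_sets lborel" for N :: nat
  proof -
    define B where "B = A \<inter> ball 0 (real N)"
    have Bb: "B \<in> sets borel" using Ab by (simp add: B_def)
    have "emeasure lborel B \<le> emeasure lborel (ball (0::real) (real N))"
      by (rule emeasure_mono) (auto simp: B_def)
    also have "\<dots> < \<infinity>" by (simp add: ball_eq_greaterThanLessThan)
    finally have Bfin: "emeasure lborel B \<noteq> \<infinity>" by simp
    define m where "m = measure lborel B"
    have Bm: "emeasure lborel B = ennreal m" unfolding m_def
      using Bfin emeasure_eq_ennreal_measure[of lborel B] by (metis infinity_ennreal_def)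
    have m0: "0 \<le> m" by (simp add: m_def)
    have key: "m \<le> \<theta> * (m + \<delta>)" if dpos: "\<delta> > 0" for \<delta>
    proof -
      obtain V where V: "open V" "B \<subseteq> V" "emeasure lborel (V - B) < \<delta>"
        using outer_regular_lborel[OF Bb dpos] by blast
      define S where "S = B - Z"
      define K where "K = {(y, \<rho>). y \<in> S \<and> 0 < \<rho> \<and> ball y \<rho> \<subseteq> V \<and>
            emeasure lborel (A \<inter> ball y \<rho>) \<le> ennreal \<theta> * emeasure lborel (ball y \<rho>)}"
      have cov: "\<exists>i. i \<in> K \<and> y \<in> ball (fst i) (snd i) \<and> snd i < dd" if "y \<in> S" "0 < dd" for y dd
      proof -
        have yV: "y \<in> V" using that V(2) by (auto simp: S_def)
        obtain k where k: "k > 0" "ball y k \<subseteq> V" using V(1) yV openE by blast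
        have yA: "y \<in> A" "y \<notin> Z" using that by (auto simp: S_def B_def)
        have mk: "0 < min dd k" using that k by simp
        obtain r where r: "0 < r" "r < min dd k"
            "emeasure lborel (A \<inter> ball y r) \<le> ennreal \<theta> * emeasure lborel (ball y r)"
          using H[OF yA(1) yA(2) mk] by blast
        have "ball y r \<subseteq> ball y k" using r by (intro subset_ball) simp
        then have "ball y r \<subseteq> V" using k(2) by (rule order_trans)
        then have "(y, r) \<in> K" using that r by (auto simp: K_def)
        then show ?thesis using r by (intro exI[of _ "(y, r)"]) auto
      qed
      obtain C where C: "countable C" "C \<subseteq> K"
        "pairwise (\<lambda>i j. disjnt (ball (fst i) (snd i)) (ball (fst j) (snd j))) C"
        "negligible (S - (\<Union>i\<in>C. ball (fst i) (snd i)))"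
        using Vitali_covering_theorem_balls[of S K fst snd, OF cov] by blast
      define U where "U = (\<Union>i\<in>C. ball (fst i) (snd i))"
      have Ub: "U \<in> sets borel" unfolding U_def by (intro borel_open open_UN) auto
      have UV: "U \<subseteq> V"
      proof
        fix z assume "z \<in> U"
        then obtain i where i: "i \<in> C" "z \<in> ball (fst i) (snd i)" by (auto simp: U_def)
        then have "i \<in> K" using C(2) by auto
        then have "ball (fst i) (snd i) \<subseteq> V" unfolding K_def by (cases i) simp
        then show "z \<in> V" using i(2) by auto
      qed
      have SUb: "S - U \<in> sets borel" using Bb Zb Ub by (auto simp: S_def)
      have SUn: "S - U \<in> null_sets lborel"
      proof -
        have "S - U \<in> null_sets lebesgue" using C(4) by (simp add: U_def negligible_iff_null_sets)
        then show ?thesis using SUb null_sets_completion_iff[of "S - U" lborel] by simp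
      qed
      have disj: "disjoint_family_on (\<lambda>i. ball (fst i) (snd i)) C"
        using C(3) unfolding disjoint_family_on_def pairwise_def disjnt_def by blast
      have disjA: "disjoint_family_on (\<lambda>i. A \<inter> ball (fst i) (snd i)) C"
        using disj unfolding disjoint_family_on_def by blast
      have "B \<subseteq> (A \<inter> U) \<union> ((S - U) \<union> Z)" by (auto simp: S_def B_def)
      then have "emeasure lborel B \<le> emeasure lborel ((A \<inter> U) \<union> ((S - U) \<union> Z))"
        by (rule emeasure_mono) (use Ab Ub SUb Zb in auto)
      also have "\<dots> = emeasure lborel (A \<inter> U)"
        by (rule emeasure_Un_null_set) (use Ab Ub SUn Zn in auto)
      also have "A \<inter> U = (\<Union>i\<in>C. A \<inter> ball (fst i) (snd i))" by (auto simp: U_def)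
      also have "emeasure lborel \<dots> = (\<integral>\<^sup>+i. emeasure lborel (A \<inter> ball (fst i) (snd i)) \<partial>count_space C)"
        by (rule emeasure_UN_countable) (use Ab C(1) disjA in auto)
      also have "\<dots> \<le> (\<integral>\<^sup>+i. ennreal \<theta> * emeasure lborel (ball (fst i) (snd i)) \<partial>count_space C)"
      proof (rule nn_integral_mono)
        fix i assume "i \<in> space (count_space C)"
        then have "i \<in> K" using C(2) by auto
        then show "emeasure lborel (A \<inter> ball (fst i) (snd i)) \<le> ennreal \<theta> * emeasure lborel (ball (fst i) (snd i))"
          unfolding K_def by (cases i) simp
      qed
      also have "\<dots> = ennreal \<theta> * (\<integral>\<^sup>+i. emeasure lborel (ball (fst i) (snd i)) \<partial>count_space C)"
        by (rule nn_integral_cmult) simp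
      also have "(\<integral>\<^sup>+i. emeasure lborel (ball (fst i) (snd i)) \<partial>count_space C) = emeasure lborel U"
        unfolding U_def by (rule emeasure_UN_countable[symmetric]) (use C(1) disj in auto)
      also have "emeasure lborel U \<le> emeasure lborel V"
        by (rule emeasure_mono[OF UV]) (use V(1) in auto)
      also have "emeasure lborel V \<le> emeasure lborel B + emeasure lborel (V - B)"
      proof -
        have "V \<subseteq> B \<union> (V - B)" by auto
        then have "emeasure lborel V \<le> emeasure lborel (B \<union> (V - B))"
          by (rule emeasure_mono) (use Bb V(1) in auto)
        also have "\<dots> \<le> emeasure lborel B + emeasure lborel (V - B)"
          by (rule emeasure_subadditive) (use Bb V(1) in auto)
        finally show ?thesis .
      qed
      also have "\<dots> \<le> ennreal m + ennreal \<delta>" using V(3) Bm by (simp add: add_left_mono less_imp_le)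
      finally have "ennreal m \<le> ennreal \<theta> * (ennreal m + ennreal \<delta>)" using Bm
        by (simp add: mult_left_mono)
      also have "\<dots> = ennreal (\<theta> * (m + \<delta>))" using m0 dpos th0 by (simp add: ennreal_mult ennreal_plus)
      finally show ?thesis using m0 th0 dpos by (simp add: ennreal_le_iff)
    qed
    have "m * (1 - \<theta>) \<le> 0"
    proof (rule field_le_epsilon)
      fix e :: real assume e: "0 < e"
      have "m \<le> \<theta> * (m + e)" using key[OF e] .
      then have "m * (1 - \<theta>) \<le> \<theta> * e" by (simp add: algebra_simps)
      also have "\<dots> \<le> e" using th1 e by (simp add: mult_le_cancel_right1 less_imp_le)
      finally show "m * (1 - \<theta>) \<le> 0 + e" by simp
    qed
    then have "m = 0" using m0 th1 by (simp add: mult_le_0_iff)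
    then show ?thesis using Bm Bb by (simp add: B_def null_sets_def)
  qed
  have "A = (\<Union>N. A \<inter> ball 0 (real N))"
  proof (rule set_eqI, rule iffI)
    fix y assume "y \<in> A"
    obtain N :: nat where "norm y < real N" using reals_Archimedean2 by blast
    then show "y \<in> (\<Union>N. A \<inter> ball 0 (real N))" using \<open>y \<in> A\<close> by auto
  qed auto
  also have "\<dots> \<in> null_sets lborel" using local by (rule null_sets_UN)
  finally show ?thesis .
qed


lemma round_shift: "round (z + of_int m :: real) = round z + m"
proof -
  have e: "z + of_int m + 1/2 = (z + 1/2) + of_int m" by simp
  have "\<lfloor>z + of_int m + 1/2\<rfloor> = \<lfloor>z + 1/2\<rfloor> + m" unfolding e by (rule floor_add_int[symmetric])
  then show ?thesis by (simp add: round_def)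
qed

lemma circ_shift: "circ_dist0 (z + of_int m) = circ_dist0 z"
  unfolding circ_dist0_def by (simp add: round_shift)

lemma circ_le_abs: "circ_dist0 z \<le> \<bar>z\<bar>"
  using round_diff_minimal[of z 0] by (simp add: circ_dist0_def)

lemma circ_nonneg: "0 \<le> circ_dist0 z"
  by (simp add: circ_dist0_def)

lemma circ_int: "circ_dist0 (of_int m) = 0"
  by (simp add: circ_dist0_def)

lemma circ_pos: "z \<notin> \<int> \<Longrightarrow> circ_dist0 z > 0"
proof -
  assume "z \<notin> \<int>"
  then have "z \<noteq> of_int (round z)" by (metis Ints_of_int)
  then show ?thesis by (simp add: circ_dist0_def)
qed

lemma lim0_iff: "(X \<longlonglongrightarrow> (0::real)) \<longleftrightarrow> (\<forall>m::nat. \<exists>N. \<forall>k\<ge>N. \<bar>X k\<bar> < 1 / real (Suc m))"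
proof
  assume L: "X \<longlonglongrightarrow> 0"
  show "\<forall>m::nat. \<exists>N. \<forall>k\<ge>N. \<bar>X k\<bar> < 1 / real (Suc m)"
  proof
    fix m :: nat
    have "1 / real (Suc m) > 0" by simp
    then show "\<exists>N. \<forall>k\<ge>N. \<bar>X k\<bar> < 1 / real (Suc m)" using L unfolding LIMSEQ_iff by simp
  qed
next
  assume R: "\<forall>m::nat. \<exists>N. \<forall>k\<ge>N. \<bar>X k\<bar> < 1 / real (Suc m)"
  show "X \<longlonglongrightarrow> 0"
  unfolding LIMSEQ_iff
  proof (intro allI impI)
    fix r :: real assume r: "0 < r"
    obtain m :: nat where m: "inverse (real (Suc m)) < r" using reals_Archimedean[OF r] by blast
    obtain N where "\<forall>k\<ge>N. \<bar>X k\<bar> < 1 / real (Suc m)" using R by blast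
    then have "\<forall>k\<ge>N. norm (X k - 0) < r" using m by (auto simp: inverse_eq_divide)
    then show "\<exists>no. \<forall>n\<ge>no. norm (X n - 0) < r" by blast
  qed
qed

lemma circ_borel: "circ_dist0 \<in> borel_measurable borel"
  unfolding circ_dist0_def round_def by measurable

lemma set_borel:
  fixes h :: "nat \<Rightarrow> real \<Rightarrow> real"
  assumes m: "\<And>k. h k \<in> borel_measurable borel"
  shows "{x. \<forall>m::nat. \<exists>N::nat. \<forall>k\<ge>N. \<bar>h k x\<bar> < 1 / real (Suc m)} \<in> sets borel"
proof -
  have lt: "{x. \<bar>h k x\<bar> < c} \<in> sets borel" for k c
  proof -
    have "(\<lambda>x. \<bar>h k x\<bar>) \<in> borel_measurable borel" using m[of k] by (rule borel_measurable_abs)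
    then have "{x \<in> space borel. \<bar>h k x\<bar> < c} \<in> sets borel" by measurable
    then show ?thesis by simp
  qed
  have e: "{x. \<forall>m::nat. \<exists>N::nat. \<forall>k\<ge>N. \<bar>h k x\<bar> < 1 / real (Suc m)}
     = (\<Inter>m. \<Union>N. \<Inter>k. {x. N \<le> k \<longrightarrow> \<bar>h k x\<bar> < 1 / real (Suc m)})"
    by (rule set_eqI) simp
  have b1: "{x. N \<le> k \<longrightarrow> \<bar>h k x\<bar> < c} \<in> sets borel" for N k :: nat and c
  proof (cases "N \<le> k")
    case True then show ?thesis using lt[of k c] by simp
  next
    case False then show ?thesis by simp
  qed
  have U: "UNIV \<in> sets (borel :: real measure)" by simp
  have C: "countable (UNIV :: nat set)" by simp
  have b2: "(\<Inter>k. {x. N \<le> k \<longrightarrow> \<bar>h k x\<bar> < c}) \<in> sets borel" for N :: nat and c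
    by (rule sets.countable_INT''[OF U C b1])
  have b3: "(\<Union>N. \<Inter>k. {x. N \<le> k \<longrightarrow> \<bar>h k x\<bar> < c}) \<in> sets borel" for c
    by (rule sets.countable_UN''[OF C b2])
  have "(\<Inter>m. \<Union>N. \<Inter>k. {x. N \<le> k \<longrightarrow> \<bar>h k x\<bar> < 1 / real (Suc m)}) \<in> sets borel"
    by (rule sets.countable_INT''[OF U C b3])
  then show ?thesis unfolding e .
qed

lemma isCont_eps:
  fixes h :: "real \<Rightarrow> real"
  assumes "isCont h s" "e > 0"
  shows "\<exists>\<delta>>0. \<forall>t. \<bar>t - s\<bar> < \<delta> \<longrightarrow> \<bar>h t - h s\<bar> < e"
proof -
  have "h \<midarrow>s\<rightarrow> h s" using assms(1) isCont_def by blast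
  then obtain \<delta> where d: "\<delta> > 0" "\<And>t. t \<noteq> s \<and> norm (t - s) < \<delta> \<Longrightarrow> norm (h t - h s) < e"
    using assms(2) unfolding LIM_eq by blast
  have "\<forall>t. \<bar>t - s\<bar> < \<delta> \<longrightarrow> \<bar>h t - h s\<bar> < e"
  proof (intro allI impI)
    fix t assume t: "\<bar>t - s\<bar> < \<delta>"
    show "\<bar>h t - h s\<bar> < e"
    proof (cases "t = s")
      case True then show ?thesis using assms(2) by simp
    next
      case False then show ?thesis using d t by simp
    qed
  qed
  then show ?thesis using d(1) by blast
qed

locale cm =
  fixes G f f2 :: "real \<Rightarrow> real" and d :: int
  assumes lift: "\<And>x. G (x + 1) = G x + of_int d"
  and Gd: "\<And>x. (G has_real_derivative f x) (at x)"
  and fd: "\<And>x. (f has_real_derivative f2 x) (at x)"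
  and f2c: "continuous_on UNIV f2"
  and fpos: "\<And>x. f x > 0"
  and G0: "G 0 = 0"
  and f0: "f 0 = 1"
  and f20: "f2 0 > 0"
begin

lemma G_isCont: "isCont G x"
  using Gd DERIV_isCont by blast

lemma f_isCont: "isCont f x"
  using fd DERIV_isCont by blast

lemma f2_isCont: "isCont f2 x"
  using f2c by (simp add: continuous_on_eq_continuous_at)

lemma G_strict: "x < y \<Longrightarrow> G x < G y"
  by (rule DERIV_pos_imp_increasing) (use Gd fpos in auto)

lemma G_mono: "x \<le> y \<Longrightarrow> G x \<le> G y"
  using G_strict by (cases "x = y") (auto simp: less_eq_real_def)

lemma G_shift_nat: "G (x + of_nat n) = G x + of_nat n * of_int d"
proof (induction n)
  case (Suc n)
  have e: "x + of_nat (Suc n) = (x + of_nat n) + 1" by simp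
  have "G (x + of_nat (Suc n)) = G (x + of_nat n) + of_int d"
    unfolding e by (rule lift)
  also have "\<dots> = G x + of_nat (Suc n) * of_int d" using Suc by (simp add: distrib_right)
  finally show ?case .
qed simp

lemma G_shift: "G (x + of_int m) = G x + of_int m * of_int d"
proof (cases "m \<ge> 0")
  case True
  then have "m = int (nat m)" by simp
  then show ?thesis using G_shift_nat[of x "nat m"] by (metis of_int_of_nat_eq)
next
  case False
  define n where "n = nat (- m)"
  have n: "m = - int n" using False n_def by simp
  have "G x = G ((x - of_nat n) + of_nat n)" by simp
  also have "\<dots> = G (x - of_nat n) + of_nat n * of_int d" by (rule G_shift_nat)
  finally show ?thesis using n by simp
qed

lemma d_pos: "d \<ge> 1"
proof -
  have "G 0 < G 1" using G_strict by simp
  then have "(0::real) < of_int d" using lift[of 0] G0 by simp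
  then show ?thesis by simp
qed

lemma f_periodic1: "f (x + 1) = f x"
proof -
  have 1: "((\<lambda>x. G (x + 1)) has_real_derivative f (x + 1) * 1) (at x)"
    by (rule DERIV_chain2[OF Gd]) (auto intro!: derivative_eq_intros)
  have 2: "((\<lambda>x. G x + of_int d) has_real_derivative f x) (at x)"
    using Gd by (auto intro!: derivative_eq_intros)
  have "(\<lambda>x. G (x + 1)) = (\<lambda>x. G x + of_int d)" using lift by auto
  with 1 2 show ?thesis using DERIV_unique by fastforce
qed

lemma f_periodic_nat: "f (x + of_nat n) = f x"
proof (induction n)
  case (Suc n)
  have "f (x + of_nat (Suc n)) = f ((x + of_nat n) + 1)" by (simp add: algebra_simps)
  also have "\<dots> = f x" using Suc f_periodic1 by simp
  finally show ?case .
qed simp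

lemma f_periodic: "f (x + of_int m) = f x"
proof (cases "m \<ge> 0")
  case True
  then have "m = int (nat m)" by simp
  then show ?thesis using f_periodic_nat[of x "nat m"] by (metis of_int_of_nat_eq)
next
  case False
  define n where "n = nat (- m)"
  have n: "m = - int n" using False n_def by simp
  have "f x = f ((x - of_nat n) + of_nat n)" by simp
  also have "\<dots> = f (x - of_nat n)" by (rule f_periodic_nat)
  finally show ?thesis using n by simp
qed

lemma f_frac: "f (frac x) = f x"
  using f_periodic[of "frac x" "\<lfloor>x\<rfloor>"] by (simp add: frac_def)


lemma f2_periodic1: "f2 (x + 1) = f2 x"
proof -
  have 1: "((\<lambda>x. f (x + 1)) has_real_derivative f2 (x + 1) * 1) (at x)"
    by (rule DERIV_chain2[OF fd]) (auto intro!: derivative_eq_intros)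
  have e: "(\<lambda>x. f (x + 1)) = f" using f_periodic1 by auto
  have "(f has_real_derivative f2 (x + 1)) (at x)" using 1 unfolding e by simp
  from DERIV_unique[OF this fd[of x]] show ?thesis .
qed

lemma f2_periodic_nat: "f2 (x + of_nat n) = f2 x"
proof (induction n)
  case (Suc n)
  have "f2 (x + of_nat (Suc n)) = f2 ((x + of_nat n) + 1)" by (simp add: algebra_simps)
  also have "\<dots> = f2 x" using Suc f2_periodic1 by simp
  finally show ?case .
qed simp

lemma f2_periodic: "f2 (x + of_int m) = f2 x"
proof (cases "m \<ge> 0")
  case True
  then have "m = int (nat m)" by simp
  then show ?thesis using f2_periodic_nat[of x "nat m"] by (metis of_int_of_nat_eq)
next
  case False
  define n where "n = nat (- m)"
  have n: "m = - int n" using False n_def by simp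
  have "f2 x = f2 ((x - of_nat n) + of_nat n)" by simp
  also have "\<dots> = f2 (x - of_nat n)" by (rule f2_periodic_nat)
  finally show ?thesis using n by simp
qed

lemma f2_frac: "f2 (frac x) = f2 x"
  using f2_periodic[of "frac x" "\<lfloor>x\<rfloor>"] by (simp add: frac_def)

lemma f_lower: "\<exists>c>0. \<forall>z. c \<le> f z"
proof -
  have "continuous_on {0..1} f" using f_isCont by (simp add: continuous_at_imp_continuous_on)
  then obtain z0 where "z0 \<in> {0..1}" "\<forall>y\<in>{0..1}. f z0 \<le> f y"
    using continuous_attains_inf[of "{0..1::real}" f] by auto
  then have "\<forall>z. f z0 \<le> f z"
    using f_frac frac_lt_1 frac_ge_0 by (metis atLeastAtMost_iff less_eq_real_def)
  then show ?thesis using fpos by blast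
qed

lemma f2_upper: "\<exists>M. \<forall>z. \<bar>f2 z\<bar> \<le> M"
proof -
  have "continuous_on {0..1} (\<lambda>z. \<bar>f2 z\<bar>)" using f2c
    by (intro continuous_intros) (auto intro: continuous_on_subset)
  then obtain z0 where "z0 \<in> {0..1}" "\<forall>y\<in>{0..1}. \<bar>f2 y\<bar> \<le> \<bar>f2 z0\<bar>"
    using continuous_attains_sup[of "{0..1::real}" "\<lambda>z. \<bar>f2 z\<bar>"] by auto
  then have "\<forall>z. \<bar>f2 z\<bar> \<le> \<bar>f2 z0\<bar>"
    using f2_frac frac_lt_1 frac_ge_0 by (metis atLeastAtMost_iff less_eq_real_def)
  then show ?thesis by blast
qed

lemma log_lip: "\<exists>L>0. \<forall>u v. f u \<le> exp (L * \<bar>u - v\<bar>) * f v"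
proof -
  obtain c where c: "c > 0" "\<And>z. c \<le> f z" using f_lower by blast
  obtain M where M: "\<And>z. \<bar>f2 z\<bar> \<le> M" using f2_upper by blast
  define L where "L = (\<bar>M\<bar> + 1) / c"
  have L: "L > 0" using c by (simp add: L_def)
  have der: "((\<lambda>z. ln (f z)) has_real_derivative f2 z / f z) (at z)" for z
    using fd[of z] fpos[of z] by (auto intro!: derivative_eq_intros)
  have bnd: "\<bar>f2 z / f z\<bar> \<le> L" for z
  proof -
    have "\<bar>f2 z / f z\<bar> = \<bar>f2 z\<bar> / f z" using fpos[of z] by simp
    also have "\<dots> \<le> (\<bar>M\<bar> + 1) / f z" using M[of z] fpos[of z]
      by (intro divide_right_mono) auto
    also have "\<dots> \<le> (\<bar>M\<bar> + 1) / c" using c(1) c(2)[of z]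
      by (intro divide_left_mono) auto
    finally show ?thesis by (simp add: L_def)
  qed
  have lnb: "ln (f u) - ln (f v) \<le> L * \<bar>u - v\<bar>" for u v
  proof (cases "u = v")
    case False
    define a where "a = min u v"
    define b where "b = max u v"
    have ab: "a < b" using False by (simp add: a_def b_def)
    obtain z where z: "a < z" "z < b" "ln (f b) - ln (f a) = (b - a) * (f2 z / f z)"
      using MVT2[OF ab, of "\<lambda>z. ln (f z)" "\<lambda>z. f2 z / f z"] der by blast
    have "\<bar>ln (f b) - ln (f a)\<bar> = (b - a) * \<bar>f2 z / f z\<bar>"
      using z(3) ab by (simp only: abs_mult)
    also have "\<dots> \<le> (b - a) * L"
      using bnd[of z] ab by (intro mult_left_mono) auto
    finally have "\<bar>ln (f b) - ln (f a)\<bar> \<le> (b - a) * L" .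
    moreover have "\<bar>ln (f u) - ln (f v)\<bar> = \<bar>ln (f b) - ln (f a)\<bar>"
      by (cases "u \<le> v") (auto simp: a_def b_def)
    moreover have "b - a = \<bar>u - v\<bar>" by (auto simp: a_def b_def)
    ultimately show ?thesis by (simp add: mult.commute)
  qed simp
  have "f u \<le> exp (L * \<bar>u - v\<bar>) * f v" for u v
  proof -
    have "f u = exp (ln (f u))" using fpos[of u] by simp
    also have "\<dots> \<le> exp (L * \<bar>u - v\<bar> + ln (f v))" using lnb[of u v] by simp
    also have "\<dots> = exp (L * \<bar>u - v\<bar>) * f v" using fpos[of v] by (simp add: exp_add)
    finally show ?thesis .
  qed
  then show ?thesis using L by blast
qed

definition Lc :: real where "Lc = (SOME L. L > 0 \<and> (\<forall>u v. f u \<le> exp (L * \<bar>u - v\<bar>) * f v))"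

lemma Lc_prop: "Lc > 0 \<and> (\<forall>u v. f u \<le> exp (Lc * \<bar>u - v\<bar>) * f v)"
  unfolding Lc_def by (rule someI_ex[OF log_lip])

lemma Lc: "Lc > 0" "f u \<le> exp (Lc * \<bar>u - v\<bar>) * f v"
  using Lc_prop by auto

definition Dn :: "nat \<Rightarrow> real \<Rightarrow> real" where
  "Dn n z = (\<Prod>j<n. f ((G^^j) z))"

lemma Dn_Suc: "Dn (Suc n) z = Dn n z * f ((G^^n) z)"
  by (simp add: Dn_def)

lemma Dn_pos: "Dn n z > 0"
  unfolding Dn_def using fpos by (intro prod_pos) auto

lemma Gn_deriv: "((G^^n) has_real_derivative Dn n z) (at z)"
proof (induction n arbitrary: z)
  case 0
  then show ?case by (simp add: Dn_def)
next
  case (Suc n)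
  have "((\<lambda>z. G ((G^^n) z)) has_real_derivative f ((G^^n) z) * Dn n z) (at z)"
    by (rule DERIV_chain2[OF Gd Suc])
  then show ?case by (simp add: Dn_Suc mult.commute)
qed

lemma Gn_isCont: "isCont (G^^n) z"
  using Gn_deriv DERIV_isCont by blast

lemma Gn_cont: "continuous_on S (G^^n)"
  using Gn_isCont by (simp add: continuous_at_imp_continuous_on)

lemma Dn_isCont: "isCont (Dn n) z"
  unfolding Dn_def
  by (intro continuous_intros isCont_o2[OF Gn_isCont f_isCont])

lemma Gn_strict: "x < y \<Longrightarrow> (G^^n) x < (G^^n) y"
  by (induction n) (auto intro: G_strict)

lemma Gn_mono: "x \<le> y \<Longrightarrow> (G^^n) x \<le> (G^^n) y"
  by (induction n) (auto intro: G_mono)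

lemma Gn_le_iff: "(G^^n) x \<le> (G^^n) y \<longleftrightarrow> x \<le> y"
  using Gn_strict Gn_mono by (meson not_le)

lemma Gn_less_iff: "(G^^n) x < (G^^n) y \<longleftrightarrow> x < y"
  using Gn_strict Gn_mono by (meson not_le)

lemma Gn_shift: "(G^^n) (x + of_int m) = (G^^n) x + of_int (m * d ^ n)"
proof (induction n)
  case (Suc n)
  have "(G^^Suc n) (x + of_int m) = G ((G^^n) x + of_int (m * d ^ n))" using Suc by simp
  also have "\<dots> = G ((G^^n) x) + of_int (m * d ^ n) * of_int d" by (rule G_shift)
  also have "\<dots> = (G^^Suc n) x + of_int (m * d ^ Suc n)" by (simp add: algebra_simps)
  finally show ?case .
qed simp

lemma Gn_0: "(G^^n) 0 = 0"
  by (induction n) (auto simp: G0)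

lemma Gn_int: "(G^^n) (of_int m) = of_int (m * d ^ n)"
  using Gn_shift[of n 0 m] by (simp add: Gn_0)

lemma MVT_Gn: assumes "a \<le> b"
  shows "\<exists>\<xi>. a \<le> \<xi> \<and> \<xi> \<le> b \<and> (G^^n) b - (G^^n) a = Dn n \<xi> * (b - a)"
proof (cases "a = b")
  case True then show ?thesis by auto
next
  case False
  then have "a < b" using assms by simp
  then obtain z where "a < z" "z < b" "(G^^n) b - (G^^n) a = (b - a) * Dn n z"
    using MVT2[OF \<open>a < b\<close>, of "G^^n" "Dn n"] Gn_deriv by blast
  then show ?thesis by (intro exI[of _ z]) (auto simp: mult.commute)
qed

lemma distortion:
  assumes "a \<le> s" "s \<le> b" "a \<le> t" "t \<le> b"
  shows "Dn n s \<le> exp (Lc * (\<Sum>j<n. (G^^j) b - (G^^j) a)) * Dn n t"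
proof (induction n)
  case 0 then show ?case by (simp add: Dn_def)
next
  case (Suc n)
  have "(G^^n) a \<le> (G^^n) s" "(G^^n) s \<le> (G^^n) b" "(G^^n) a \<le> (G^^n) t" "(G^^n) t \<le> (G^^n) b"
    using assms by (auto intro: Gn_mono)
  then have ab: "\<bar>(G^^n) s - (G^^n) t\<bar> \<le> (G^^n) b - (G^^n) a"
    by (auto simp: abs_le_iff)
  have "f ((G^^n) s) \<le> exp (Lc * \<bar>(G^^n) s - (G^^n) t\<bar>) * f ((G^^n) t)"
    by (rule Lc(2))
  also have "\<dots> \<le> exp (Lc * ((G^^n) b - (G^^n) a)) * f ((G^^n) t)"
    using ab Lc(1) fpos[of "(G^^n) t"] by (intro mult_right_mono) (auto intro!: mult_left_mono)
  finally have 1: "f ((G^^n) s) \<le> exp (Lc * ((G^^n) b - (G^^n) a)) * f ((G^^n) t)" .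
  have "Dn (Suc n) s = Dn n s * f ((G^^n) s)" by (rule Dn_Suc)
  also have "\<dots> \<le> (exp (Lc * (\<Sum>j<n. (G^^j) b - (G^^j) a)) * Dn n t) *
       (exp (Lc * ((G^^n) b - (G^^n) a)) * f ((G^^n) t))"
    using Suc 1 Dn_pos fpos by (intro mult_mono) (auto intro: less_imp_le)
  also have "\<dots> = exp (Lc * (\<Sum>j<Suc n. (G^^j) b - (G^^j) a)) * Dn (Suc n) t"
    by (simp add: Dn_Suc distrib_left exp_add)
  finally show ?case .
qed

lemma G_surj: "\<exists>x. G x = y"
proof -
  define N where "N = \<lceil>\<bar>y\<bar>\<rceil>"
  have N0: "N \<ge> 0" by (simp add: N_def)
  have "G (of_int (-N)) = of_int (-N * d)" using G_shift[of 0 "-N"] G0 by simp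
  moreover have "of_int (-N * d) \<le> y"
  proof -
    have "of_int (-N * d) \<le> (of_int (-N) :: real)" using N0 d_pos
      by (simp add: mult_le_cancel_left1)
    also have "\<dots> \<le> y" unfolding N_def by linarith
    finally show ?thesis .
  qed
  moreover have "G (of_int N) = of_int (N * d)" using G_shift[of 0 "N"] G0 by simp
  moreover have "y \<le> of_int (N * d)"
  proof -
    have "y \<le> (of_int N :: real)" unfolding N_def by linarith
    also have "\<dots> \<le> of_int (N * d)" using N0 d_pos
      by (simp add: mult_le_cancel_left1)
    finally show ?thesis .
  qed
  ultimately show ?thesis
    using IVT'[of G "of_int (-N)" y "of_int N"] N0 G_isCont
    by (auto simp: continuous_at_imp_continuous_on)
qed

lemma Gn_surj: "\<exists>x. (G^^n) x = y"
proof (induction n arbitrary: y)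
  case (Suc n)
  obtain z where "G z = y" using G_surj by blast
  moreover obtain x where "(G^^n) x = z" using Suc by blast
  ultimately show ?case by auto
qed simp


lemma orbit_limit_fixed:
  assumes "(\<lambda>n. (G^^n) z) \<longlonglongrightarrow> L"
  shows "G L = L"
proof -
  have 1: "(\<lambda>n. G ((G^^n) z)) \<longlonglongrightarrow> G L"
    by (rule isCont_tendsto_compose[OF G_isCont assms])
  have "(\<lambda>n. (G^^(Suc n)) z) \<longlonglongrightarrow> L" using LIMSEQ_Suc[OF assms] .
  then have "(\<lambda>n. G ((G^^n) z)) \<longlonglongrightarrow> L" by simp
  with 1 show ?thesis using LIMSEQ_unique by blast
qed

lemma e0_ex: "\<exists>e. 0 < e \<and> e < 1/4 \<and> (\<forall>z. \<bar>z\<bar> \<le> e \<longrightarrow> f2 z \<ge> f2 0 / 2)"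
proof -
  have "f2 \<midarrow>0\<rightarrow> f2 0" using f2_isCont isCont_def by blast
  then obtain s where s: "s > 0" "\<And>x. x \<noteq> 0 \<and> norm (x - 0) < s \<Longrightarrow> norm (f2 x - f2 0) < f2 0 / 2"
    using f20 unfolding LIM_eq by (metis half_gt_zero)
  define e where "e = min (s/2) (1/8)"
  have "\<forall>z. \<bar>z\<bar> \<le> e \<longrightarrow> f2 z \<ge> f2 0 / 2"
  proof (intro allI impI)
    fix z :: real assume z: "\<bar>z\<bar> \<le> e"
    show "f2 z \<ge> f2 0 / 2"
    proof (cases "z = 0")
      case True then show ?thesis using f20 by simp
    next
      case False
      then have "norm (f2 z - f2 0) < f2 0 / 2" using s z by (auto simp: e_def)
      then have "\<bar>f2 z - f2 0\<bar> < f2 0 / 2" by simp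
      then show ?thesis using abs_ge_minus_self[of "f2 z - f2 0"] by linarith
    qed
  qed
  moreover have "0 < e" "e < 1/4" using s by (auto simp: e_def)
  ultimately show ?thesis by blast
qed

definition e0 :: real where "e0 = (SOME e. 0 < e \<and> e < 1/4 \<and> (\<forall>z. \<bar>z\<bar> \<le> e \<longrightarrow> f2 z \<ge> f2 0 / 2))"

lemma e0_prop: "0 < e0 \<and> e0 < 1/4 \<and> (\<forall>z. \<bar>z\<bar> \<le> e0 \<longrightarrow> f2 z \<ge> f2 0 / 2)"
  unfolding e0_def by (rule someI_ex[OF e0_ex])

lemma e0_pos: "0 < e0" and e0_small: "e0 < 1/4"
  using e0_prop by auto

lemma e0_f2: "\<bar>z\<bar> \<le> e0 \<Longrightarrow> f2 z \<ge> f2 0 / 2"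
  using e0_prop by auto

lemma f_right: assumes "0 \<le> z" "z \<le> e0" shows "f z \<ge> 1 + (f2 0 / 2) * z"
proof (cases "z = 0")
  case True then show ?thesis using f0 by simp
next
  case False
  then have "0 < z" using assms by simp
  then obtain \<xi> where xi: "0 < \<xi>" "\<xi> < z" "f z - f 0 = (z - 0) * f2 \<xi>"
    using MVT2[of 0 z f f2] fd by blast
  have "f2 \<xi> \<ge> f2 0 / 2" using e0_f2[of \<xi>] xi assms by simp
  then have h: "(f2 0 / 2) * z \<le> f2 \<xi> * z" using \<open>0 < z\<close> by (intro mult_right_mono) auto
  have "f z = 1 + f2 \<xi> * z" using xi f0 by (simp add: algebra_simps)
  then show ?thesis using h by linarith
qed

lemma f_left: assumes "-e0 \<le> z" "z \<le> 0" shows "f z \<le> 1 + (f2 0 / 2) * z"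
proof (cases "z = 0")
  case True then show ?thesis using f0 by simp
next
  case False
  then have "z < 0" using assms by simp
  then obtain \<xi> where xi: "z < \<xi>" "\<xi> < 0" "f 0 - f z = (0 - z) * f2 \<xi>"
    using MVT2[of z 0 f f2] fd by blast
  have "f2 \<xi> \<ge> f2 0 / 2" using e0_f2[of \<xi>] xi assms by simp
  then have h: "(f2 0 / 2) * (-z) \<le> f2 \<xi> * (-z)" using \<open>z < 0\<close> by (intro mult_right_mono) auto
  have "f z = 1 + f2 \<xi> * z" using xi f0 by (simp add: algebra_simps)
  then show ?thesis using h by (simp add: algebra_simps)
qed

lemma f_ge1_right: "0 \<le> z \<Longrightarrow> z \<le> e0 \<Longrightarrow> f z \<ge> 1"
  using f_right[of z] f20 mult_nonneg_nonneg[of "f2 0 / 2" z] by linarith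

lemma f_gt1_right: "0 < z \<Longrightarrow> z \<le> e0 \<Longrightarrow> f z > 1"
  using f_right[of z] f20 mult_pos_pos[of "f2 0 / 2" z] by linarith

lemma f_lt1_left: "-e0 \<le> z \<Longrightarrow> z < 0 \<Longrightarrow> f z < 1"
  using f_left[of z] f20 mult_pos_neg[of "f2 0 / 2" z] by linarith

lemma G_gt_right: assumes "0 < z" "z \<le> e0" shows "G z > z"
proof -
  obtain \<xi> where xi: "0 < \<xi>" "\<xi> < z" "G z - G 0 = (z - 0) * f \<xi>"
    using MVT2[of 0 z G f] Gd assms by blast
  have "f \<xi> > 1" using f_gt1_right[of \<xi>] xi assms by simp
  then have "z * f \<xi> > z * 1" using assms by (intro mult_strict_left_mono) auto
  then show ?thesis using xi G0 by simp
qed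

lemma G_gt_left: assumes "-e0 \<le> z" "z < 0" shows "G z > z" "G z < 0"
proof -
  obtain \<xi> where xi: "z < \<xi>" "\<xi> < 0" "G 0 - G z = (0 - z) * f \<xi>"
    using MVT2[of z 0 G f] Gd assms by blast
  have "f \<xi> < 1" using f_lt1_left[of \<xi>] xi assms by simp
  then have "(-z) * f \<xi> < (-z) * 1" using assms by (intro mult_strict_left_mono) auto
  then show "G z > z" using xi G0 by simp
  show "G z < 0" using G_strict[OF assms(2)] G0 by simp
qed

lemma Gn_pos: "0 < z \<Longrightarrow> 0 < (G^^n) z"
  using Gn_strict[of 0 z n] Gn_0 by simp

lemma step_up: assumes "0 < w" "G w \<le> c" "c \<le> e0" shows "w < G w"
proof (cases "w \<le> e0")
  case True then show ?thesis using G_gt_right assms by blast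
next
  case False
  then have "G e0 < G w" using G_strict by simp
  moreover have "G e0 > e0" using G_gt_right e0_pos by simp
  ultimately show ?thesis using assms by simp
qed

lemma orbit_up:
  assumes "0 < z" "(G^^M) z \<le> c" "c \<le> e0" "i \<le> M"
  shows "(G^^i) z \<le> (G^^M) z"
  using assms
proof (induction M arbitrary: z i)
  case 0 then show ?case by simp
next
  case (Suc M)
  have eq: "(G^^Suc M) z = (G^^M) (G z)" by (simp only: funpow_Suc_right comp_def)
  have Gz: "0 < G z" using G_strict[OF Suc.prems(1)] G0 by simp
  have le: "(G^^M) (G z) \<le> c" using Suc.prems(2) unfolding eq .
  have IH: "(G^^i) (G z) \<le> (G^^M) (G z)" if "i \<le> M" for i
    by (rule Suc.IH[OF Gz le Suc.prems(3) that])
  show ?case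
  proof (cases i)
    case 0
    have "G z \<le> (G^^M) (G z)" using IH[of 0] by simp
    then have "G z \<le> c" using le by linarith
    then have "z < G z" using step_up Suc.prems(1,3) by blast
    then show ?thesis using 0 eq IH[of 0] by simp
  next
    case (Suc i')
    then have e2: "(G^^i) z = (G^^i') (G z)" by (simp only: funpow_Suc_right comp_def)
    have "i' \<le> M" using Suc Suc.prems(4) by simp
    then show ?thesis unfolding e2 eq by (rule IH)
  qed
qed

lemma no_stay_right:
  assumes "0 < z" "\<And>n. (G^^n) z \<le> e0"
  shows False
proof -
  have inc: "incseq (\<lambda>n. (G^^n) z)"
  proof (rule incseq_SucI)
    fix n
    have "G ((G^^n) z) \<le> e0" using assms(2)[of "Suc n"] by simp
    then have "(G^^n) z < G ((G^^n) z)"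
      using step_up[of "(G^^n) z" e0] Gn_pos[OF assms(1)] by simp
    then show "(G^^n) z \<le> (G^^Suc n) z" by simp
  qed
  have b: "\<forall>i. (G^^i) z \<le> e0" using assms by blast
  obtain L where L: "(\<lambda>n. (G^^n) z) \<longlonglongrightarrow> L" "\<forall>i. (G^^i) z \<le> L"
    using incseq_convergent[OF inc b] by blast
  have "\<exists>N. \<forall>n\<ge>N. (G^^n) z \<le> e0" using b by blast
  then have "L \<le> e0" using LIMSEQ_le_const2[OF L(1)] by blast
  have "0 < L" using L(2)[rule_format, of 0] assms by simp
  have "G L = L" by (rule orbit_limit_fixed[OF L(1)])
  moreover have "G L > L" using G_gt_right \<open>0 < L\<close> \<open>L \<le> e0\<close> by blast
  ultimately show False by simp
qed

lemma left_conv: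
  assumes "-e0 \<le> z" "z \<le> 0"
  shows "(\<lambda>n. (G^^n) z) \<longlonglongrightarrow> 0"
proof (cases "z = 0")
  case True then show ?thesis using Gn_0 by simp
next
  case False
  then have z: "z < 0" using assms by simp
  have inv: "-e0 \<le> (G^^n) z \<and> (G^^n) z < 0" for n
  proof (induction n)
    case 0 then show ?case using assms z by simp
  next
    case (Suc n)
    then show ?case using G_gt_left[of "(G^^n) z"] by simp
  qed
  have inc: "incseq (\<lambda>n. (G^^n) z)"
  proof (rule incseq_SucI)
    fix n show "(G^^n) z \<le> (G^^Suc n) z" using G_gt_left[of "(G^^n) z"] inv[of n] by simp
  qed
  have inv0: "\<forall>i. (G^^i) z \<le> 0" using inv less_imp_le by blast
  obtain L where L: "(\<lambda>n. (G^^n) z) \<longlonglongrightarrow> L" "\<forall>i. (G^^i) z \<le> L"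
    using incseq_convergent[OF inc inv0] by blast
  have "\<exists>N. \<forall>n\<ge>N. (G^^n) z \<le> 0" using inv0 by blast
  then have "L \<le> 0" using LIMSEQ_le_const2[OF L(1)] by blast
  have "-e0 \<le> L" using L(2)[rule_format, of 0] assms by simp
  have "G L = L" by (rule orbit_limit_fixed[OF L(1)])
  have "L = 0"
  proof (rule ccontr)
    assume "L \<noteq> 0"
    then have "L < 0" using \<open>L \<le> 0\<close> by simp
    then have "G L > L" using G_gt_left(1)[of L] \<open>-e0 \<le> L\<close> by blast
    with \<open>G L = L\<close> show False by simp
  qed
  then show ?thesis using L by simp
qed


lemma subst_bound:
  assumes ab: "a \<le> b" and Sb: "S \<in> sets borel" and bk: "\<And>t. (G^^n) t \<in> S \<Longrightarrow> t \<in> S"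
    and K: "\<And>t. a \<le> t \<Longrightarrow> t \<le> b \<Longrightarrow> Dn n t \<le> K"
  shows "emeasure lborel (S \<inter> {(G^^n) a..(G^^n) b}) \<le> ennreal K * emeasure lborel (S \<inter> {a..b})"
proof -
  have K0: "0 \<le> K" using K[of a] ab Dn_pos[of n a] by simp
  have m1: "set_borel_measurable borel {(G^^n) a..(G^^n) b} (indicator S :: real \<Rightarrow> real)"
    unfolding set_borel_measurable_def
    by (intro borel_measurable_scaleR borel_measurable_indicator) (use Sb in auto)
  have "emeasure lborel (S \<inter> {(G^^n) a..(G^^n) b}) = (\<integral>\<^sup>+y. indicator (S \<inter> {(G^^n) a..(G^^n) b}) y \<partial>lborel)"
    using Sb by simp
  also have "\<dots> = (\<integral>\<^sup>+y. ennreal (indicator S y * indicator {(G^^n) a..(G^^n) b} y) \<partial>lborel)"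
    by (intro nn_integral_cong) (auto split: split_indicator)
  also have "\<dots> = (\<integral>\<^sup>+x. ennreal (indicator S ((G^^n) x) * Dn n x * indicator {a..b} x) \<partial>lborel)"
    by (rule nn_integral_substitution[OF m1 Gn_deriv _ _ ab])
       (auto intro: less_imp_le Dn_pos simp: continuous_at_imp_continuous_on Dn_isCont)
  also have "\<dots> \<le> (\<integral>\<^sup>+x. ennreal K * indicator (S \<inter> {a..b}) x \<partial>lborel)"
  proof (rule nn_integral_mono)
    fix x :: real
    show "ennreal (indicator S ((G^^n) x) * Dn n x * indicator {a..b} x) \<le> ennreal K * indicator (S \<inter> {a..b}) x"
    proof (cases "x \<in> {a..b} \<and> (G^^n) x \<in> S")
      case True
      then have "x \<in> S" using bk by blast
      then show ?thesis using True K[of x] by (simp add: indicator_def ennreal_leI)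
    next
      case False
      then have z: "indicator S ((G^^n) x) * Dn n x * indicator {a..b} x = (0::real)"
        by (auto simp: indicator_def)
      show ?thesis unfolding z by simp
    qed
  qed
  also have "\<dots> = ennreal K * emeasure lborel (S \<inter> {a..b})"
    by (rule nn_integral_cmult_indicator) (use Sb in auto)
  finally show ?thesis .
qed


abbreviation B where "B \<equiv> basin0_lift G"

lemma B_shift: "z \<in> B \<Longrightarrow> z + of_int m \<in> B"
proof -
  assume "z \<in> B"
  then have "(\<lambda>k. circ_dist0 ((G^^k) z)) \<longlonglongrightarrow> 0" by (simp add: basin0_lift_def)
  moreover have "circ_dist0 ((G^^k) (z + of_int m)) = circ_dist0 ((G^^k) z)" for k
    by (simp only: Gn_shift circ_shift)
  ultimately show ?thesis by (simp add: basin0_lift_def)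
qed

lemma B_shift_iff: "z + of_int m \<in> B \<longleftrightarrow> z \<in> B"
  using B_shift[of z m] B_shift[of "z + of_int m" "-m"] by auto

lemma B_G: "G z \<in> B \<longleftrightarrow> z \<in> B"
proof -
  have e: "circ_dist0 ((G^^k) (G z)) = circ_dist0 ((G^^Suc k) z)" for k
    by (simp add: funpow_swap1)
  have "(\<lambda>k. circ_dist0 ((G^^Suc k) z)) \<longlonglongrightarrow> 0 \<longleftrightarrow> (\<lambda>k. circ_dist0 ((G^^k) z)) \<longlonglongrightarrow> 0"
    using LIMSEQ_Suc[of "\<lambda>k. circ_dist0 ((G^^k) z)" 0] LIMSEQ_imp_Suc[of "\<lambda>k. circ_dist0 ((G^^k) z)" 0]
    by blast
  then show ?thesis
    unfolding basin0_lift_def mem_Collect_eq e .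
qed

lemma B_Gn: "(G^^k) z \<in> B \<longleftrightarrow> z \<in> B"
  by (induction k) (auto simp: B_G)

lemma B_fixed: assumes "G q = q" "q \<notin> \<int>" shows "q \<notin> B"
proof
  assume "q \<in> B"
  then have L: "(\<lambda>k. circ_dist0 ((G^^k) q)) \<longlonglongrightarrow> 0" by (simp add: basin0_lift_def)
  have "(G^^k) q = q" for k
  proof (induction k)
    case (Suc k) then show ?case using assms(1) by simp
  qed simp
  then have eq: "(\<lambda>k. circ_dist0 ((G^^k) q)) = (\<lambda>k. circ_dist0 q)" by simp
  have "(\<lambda>k::nat. circ_dist0 q) \<longlonglongrightarrow> 0" using L unfolding eq .
  then have "circ_dist0 q = 0" using LIMSEQ_const_iff[of "circ_dist0 q" 0] by simp
  then show False using circ_pos[OF assms(2)] by simp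
qed

lemma B_int: "of_int m \<in> B"
proof -
  have "circ_dist0 ((G^^k) (of_int m)) = 0" for k by (simp only: Gn_int circ_int)
  then show ?thesis unfolding basin0_lift_def by simp
qed

lemma B_left: assumes "-e0 \<le> z" "z \<le> 0" shows "z \<in> B"
proof -
  have L: "(\<lambda>k. (G^^k) z) \<longlonglongrightarrow> 0" by (rule left_conv[OF assms])
  then have "(\<lambda>k. \<bar>(G^^k) z\<bar>) \<longlonglongrightarrow> 0" using tendsto_rabs_zero by blast
  then have "(\<lambda>k. circ_dist0 ((G^^k) z)) \<longlonglongrightarrow> 0"
  proof (rule tendsto_sandwich[where f="\<lambda>_. 0" and h="\<lambda>k. \<bar>(G^^k) z\<bar>", rotated 3])
    show "\<forall>\<^sub>F n in sequentially. 0 \<le> circ_dist0 ((G^^n) z)" by (simp add: circ_nonneg)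
    show "\<forall>\<^sub>F n in sequentially. circ_dist0 ((G^^n) z) \<le> \<bar>(G^^n) z\<bar>" by (simp add: circ_le_abs)
    show "((\<lambda>_. 0) \<longlongrightarrow> 0) sequentially" by simp
  qed
  then show ?thesis by (simp add: basin0_lift_def)
qed

lemma Gn_borel: "(G^^k) \<in> borel_measurable borel"
  using Gn_cont[of UNIV k] by (simp add: borel_measurable_continuous_onI)

lemma B_borel: "B \<in> sets borel"
proof -
  have m: "(\<lambda>x. circ_dist0 ((G^^k) x)) \<in> borel_measurable borel" for k
    using measurable_comp[OF Gn_borel circ_borel] by (simp add: comp_def)
  have "B = {x. \<forall>m::nat. \<exists>N. \<forall>k\<ge>N. \<bar>circ_dist0 ((G^^k) x)\<bar> < 1 / real (Suc m)}"
    unfolding basin0_lift_def by (simp only: lim0_iff)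
  also have "\<dots> \<in> sets borel"
    by (rule set_borel[OF m])
  finally show ?thesis .
qed


lemma no_right:
  assumes ex: "\<And>x. (\<forall>n::int. x - of_int n \<notin> W0_lift G) \<Longrightarrow> f x > 1"
    and z0: "0 \<le> z0" "z0 < 1" "z0 \<notin> B"
    and w: "0 < w" "{0..w} \<subseteq> B"
  shows False
proof -
  have WB: "W0_lift G \<subseteq> B" unfolding W0_lift_def by (rule connected_component_subset)
  have w1: "w < 1"
  proof (rule ccontr)
    assume "\<not> w < 1"
    then have "z0 \<in> {0..w}" using z0 by simp
    then show False using w(2) z0(3) by blast
  qed
  define T where "T = {t. 0 \<le> t \<and> t \<le> 1 \<and> {0..t} \<subseteq> B}"
  have wT: "w \<in> T" using w w1 by (simp add: T_def)
  have Tne: "T \<noteq> {}" using wT by blast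
  have Tbd: "bdd_above T" unfolding T_def by (rule bdd_aboveI[of _ 1]) simp
  define s where "s = Sup T"
  have sw: "w \<le> s" unfolding s_def by (rule cSup_upper[OF wT Tbd])
  have s1: "s \<le> 1" unfolding s_def by (rule cSup_least[OF Tne]) (simp add: T_def)
  have below: "u \<in> B" if u: "0 \<le> u" "u < s" for u
  proof -
    obtain t where "t \<in> T" "u < t" using less_cSup_iff[OF Tne Tbd] u(2) by (auto simp: s_def)
    then show ?thesis using u(1) by (auto simp: T_def)
  qed
  have s0: "0 < s" using sw w by simp
  have sl1: "s < 1"
  proof (rule ccontr)
    assume "\<not> s < 1" then have "s = 1" using s1 by simp
    then show False using below[of z0] z0 by simp
  qed
  have notT: "\<not> s' \<in> T" if "s < s'" for s'
    using cSup_upper[OF _ Tbd, of s'] that by (auto simp: s_def)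
  consider "s < G s" | "G s < s" | "G s = s" by linarith
  then show False
  proof cases
    case 1
    define E where "E = (G s - s) / 2"
    have E0: "E > 0" using 1 by (simp add: E_def)
    have GsE: "G s = s + 2 * E" by (simp add: E_def field_simps)
    obtain \<delta> where d: "\<delta> > 0" "\<And>t. \<bar>t - s\<bar> < \<delta> \<Longrightarrow> \<bar>G t - G s\<bar> < E"
      using isCont_eps[OF G_isCont[of s] E0] by auto
    define t where "t = s - min (\<delta>/2) (s/2)"
    have t: "0 < t" "t < s" "\<bar>t - s\<bar> < \<delta>" using d(1) s0 by (auto simp: t_def)
    have Gt: "G t > s + E" using d(2)[OF t(3)] abs_ge_minus_self[of "G t - G s"] GsE by linarith
    define s' where "s' = min (s + E) 1"
    have ss': "s < s'" using E0 sl1 by (simp add: s'_def)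
    have "{0..s'} \<subseteq> B"
    proof
      fix u assume u: "u \<in> {0..s'}"
      obtain v where v: "G v = u" using G_surj by blast
      have "G 0 \<le> G v" using u v G0 by simp
      then have v0: "0 \<le> v" using G_strict by (meson not_le)
      have "G v < G t" using u v Gt by (simp add: s'_def)
      then have vt: "v < t" using G_mono by (meson not_le)
      have "v \<in> B" using below[of v] v0 vt t by simp
      then show "u \<in> B" using v B_G by blast
    qed
    then have "s' \<in> T" using ss' s0 by (simp add: T_def s'_def)
    then show False using notT[OF ss'] by simp
  next
    case 2
    have Gs0: "0 < G s" using G_strict[OF s0] G0 by simp
    have "G s \<in> B" using below[of "G s"] Gs0 2 by simp
    then have sB: "s \<in> B" using B_G by blast
    obtain \<delta> where d: "\<delta> > 0" "\<And>t. \<bar>t - s\<bar> < \<delta> \<Longrightarrow> \<bar>G t - G s\<bar> < s - G s"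
      using isCont_eps[OF G_isCont[of s], of "s - G s"] 2 by auto
    define s' where "s' = min (s + \<delta>/2) 1"
    have ss': "s < s'" using d(1) sl1 by (simp add: s'_def)
    have "{0..s'} \<subseteq> B"
    proof
      fix u assume u: "u \<in> {0..s'}"
      show "u \<in> B"
      proof (cases "u < s")
        case True then show ?thesis using below u by simp
      next
        case False
        then have us: "\<bar>u - s\<bar> < \<delta>" using u d(1) by (simp add: s'_def)
        have "G u < s" using d(2)[OF us] abs_ge_self[of "G u - G s"] by linarith
        moreover have "G s \<le> G u" using False G_mono by simp
        ultimately have "G u \<in> B" using below[of "G u"] Gs0 by simp
        then show ?thesis using B_G by blast
      qed
    qed
    then have "s' \<in> T" using ss' s0 by (simp add: T_def s'_def)
    then show False using notT[OF ss'] by simp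
  next
    case 3
    have snZ: "s \<notin> \<int>"
    proof
      assume "s \<in> \<int>" then obtain k :: int where "s = of_int k" by (rule Ints_cases)
      then show False using s0 sl1 by simp
    qed
    have sB: "s \<notin> B" by (rule B_fixed[OF 3 snZ])
    have "\<forall>n::int. s - of_int n \<notin> W0_lift G"
    proof (intro allI notI)
      fix n :: int assume "s - of_int n \<in> W0_lift G"
      then have "s - of_int n \<in> B" using WB by blast
      then have "(s - of_int n) + of_int n \<in> B" by (rule B_shift)
      then show False using sB by simp
    qed
    then have fs: "f s > 1" by (rule ex)
    obtain \<delta> where d: "\<delta> > 0" "\<And>t. \<bar>t - s\<bar> < \<delta> \<Longrightarrow> \<bar>f t - f s\<bar> < f s - 1"
      using isCont_eps[OF f_isCont[of s], of "f s - 1"] fs by auto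
    define t1 where "t1 = s - min (\<delta>/2) (s/2)"
    have t1: "0 < t1" "t1 < s" using d(1) s0 by (auto simp: t1_def)
    obtain \<xi> where xi: "t1 < \<xi>" "\<xi> < s" "G s - G t1 = (s - t1) * f \<xi>"
      using MVT2[OF t1(2), of G f] Gd by blast
    have "\<bar>\<xi> - s\<bar> < \<delta>" using xi d(1) by (simp add: t1_def)
    then have "f \<xi> > 1" using d(2) abs_ge_minus_self[of "f \<xi> - f s"] by fastforce
    then have "(s - t1) * 1 < (s - t1) * f \<xi>" using t1 by (intro mult_strict_left_mono) auto
    then have Gt1: "G t1 < t1" using xi(3) 3 by simp
    define t0 where "t0 = min e0 (t1/2)"
    have t0: "0 < t0" "t0 < t1" "t0 \<le> e0" using e0_pos t1 by (auto simp: t0_def)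
    have Gt0: "t0 < G t0" using G_gt_right t0 by simp
    have cont: "continuous_on {t0..t1} (\<lambda>x. G x - x)"
      using G_isCont by (intro continuous_intros) (simp add: continuous_at_imp_continuous_on)
    obtain q where q: "t0 \<le> q" "q \<le> t1" "G q - q = 0"
      using IVT2'[of "\<lambda>x. G x - x" t1 0 t0, OF _ _ _ cont] Gt0 Gt1 t0 by auto
    have qnZ: "q \<notin> \<int>"
    proof
      assume "q \<in> \<int>" then obtain k :: int where k: "q = of_int k" by (rule Ints_cases)
      have "(0::real) < of_int k" "of_int k < (1::real)" using k q t0 t1 sl1 by auto
      then have "0 < k" "k < 1" by simp_all
      then show False by simp
    qed
    have "q \<notin> B" using B_fixed[OF _ qnZ] q by simp
    moreover have "q \<in> B" using below[of q] q t0 t1 by simp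
    ultimately show False by simp
  qed
qed

end

locale cm2 = cm +
  fixes p :: real
  assumes p_lo: "-1 < p" and p_hi: "p < 0"
  and expand: "\<And>x. (\<forall>n::int. x - of_int n \<notin> {p<..0}) \<Longrightarrow> f x > 1"
begin

lemma expand_frac: assumes "0 < frac x" "frac x \<le> 1 + p" shows "f x > 1"
proof (rule expand, intro allI)
  fix n :: int
  have x: "x = frac x + of_int \<lfloor>x\<rfloor>" by (simp add: frac_def)
  show "x - of_int n \<notin> {p<..0}"
  proof (cases "\<lfloor>x\<rfloor> - n \<ge> 0")
    case True
    then have "x - of_int n > 0" using assms x
      by (metis add.commute add_pos_nonneg diff_add_eq of_int_0_le_iff of_int_diff)
    then show ?thesis by simp
  next
    case False
    then have "\<lfloor>x\<rfloor> - n \<le> -1" by simp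
    then have "of_int (\<lfloor>x\<rfloor> - n) \<le> (-1::real)" by (metis of_int_le_iff of_int_minus of_int_1)
    then have "x - of_int n \<le> p" using assms x by simp
    then show ?thesis by simp
  qed
qed

lemma frac_eq_self: "0 \<le> z \<Longrightarrow> z < 1 \<Longrightarrow> frac z = z"
  by (simp add: frac_eq)

lemma expand_direct: "0 < z \<Longrightarrow> z \<le> 1 + p \<Longrightarrow> f z > 1"
  using expand_frac[of z] frac_eq_self[of z] p_hi by simp

lemma f_ge1_frac: assumes "frac x \<le> 1 + p" shows "f x \<ge> 1"
proof (cases "frac x = 0")
  case True
  have "f x = f (frac x)" using f_frac[of x] by simp
  also have "\<dots> = f 0" by (simp only: True)
  finally show ?thesis using f0 by simp
next
  case False
  then have "0 < frac x" using frac_ge_0[of x] by simp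
  then show ?thesis using expand_frac assms by fastforce
qed

lemma f_near0_ex: "\<exists>\<delta>>0. \<forall>z. \<bar>z\<bar> \<le> \<delta> \<longrightarrow> f z \<le> 3/2"
proof -
  have "f \<midarrow>0\<rightarrow> f 0" using f_isCont isCont_def by blast
  then obtain s where s: "s > 0" "\<And>x. x \<noteq> 0 \<and> norm (x - 0) < s \<Longrightarrow> norm (f x - f 0) < 1/2"
    unfolding LIM_eq by (metis half_gt_zero zero_less_one)
  have "\<forall>z. \<bar>z\<bar> \<le> s/2 \<longrightarrow> f z \<le> 3/2"
  proof (intro allI impI)
    fix z :: real assume z: "\<bar>z\<bar> \<le> s/2"
    show "f z \<le> 3/2"
    proof (cases "z = 0")
      case True then show ?thesis using f0 by simp
    next
      case False
      then have "norm (f z - f 0) < 1/2" using s z by auto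
      then have "\<bar>f z - 1\<bar> < 1/2" using f0 by simp
      then show ?thesis using abs_ge_self[of "f z - 1"] by linarith
    qed
  qed
  then show ?thesis using s by (intro exI[of _ "s/2"]) auto
qed

definition df :: real where "df = (SOME \<delta>. \<delta> > 0 \<and> (\<forall>z. \<bar>z\<bar> \<le> \<delta> \<longrightarrow> f z \<le> 3/2))"

lemma df: "df > 0" "\<bar>z\<bar> \<le> df \<Longrightarrow> f z \<le> 3/2"
proof -
  have "df > 0 \<and> (\<forall>z. \<bar>z\<bar> \<le> df \<longrightarrow> f z \<le> 3/2)"
    unfolding df_def using someI_ex[OF f_near0_ex] by simp
  then show "df > 0" "\<bar>z\<bar> \<le> df \<Longrightarrow> f z \<le> 3/2" by auto
qed

definition eps :: real where "eps = min (min (e0/2) ((1+p)/2)) df"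

lemma eps_pos: "0 < eps" and eps_e0: "2 * eps \<le> e0" and eps_p: "eps < 1 + p"
  and eps_df: "eps \<le> df" and eps_small: "eps < 1/8"
  using e0_pos e0_small p_lo df(1) by (auto simp: eps_def min_def)

lemma G_le_eps: assumes "0 \<le> y" "y \<le> eps" shows "G y \<le> 3/2 * eps"
proof -
  have "G y \<le> G eps" using G_mono assms by simp
  obtain \<xi> where xi: "0 < \<xi>" "\<xi> < eps" "G eps - G 0 = (eps - 0) * f \<xi>"
    using MVT2[of 0 eps G f] Gd eps_pos by blast
  have "f \<xi> \<le> 3/2" using df(2)[of \<xi>] xi eps_df by simp
  then have h: "eps * f \<xi> \<le> eps * (3/2)" using eps_pos by (intro mult_left_mono) auto
  have "G eps = eps * f \<xi>" using xi G0 by simp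
  then show ?thesis using h \<open>G y \<le> G eps\<close> by linarith
qed

lemma beta_ex: "\<exists>\<beta>>0. \<forall>z. eps/2 \<le> z \<and> z \<le> 2*eps \<longrightarrow> \<beta> \<le> G z - z"
proof -
  have "continuous_on {eps/2..2*eps} (\<lambda>z. G z - z)"
    using G_isCont by (intro continuous_intros) (simp add: continuous_at_imp_continuous_on)
  then obtain z0 where z0: "z0 \<in> {eps/2..2*eps}" "\<forall>y\<in>{eps/2..2*eps}. G z0 - z0 \<le> G y - y"
    using continuous_attains_inf[of "{eps/2..2*eps}" "\<lambda>z. G z - z"] eps_pos by auto
  have "G z0 > z0" using G_gt_right[of z0] z0(1) eps_pos eps_e0 by auto
  then show ?thesis using z0 by (intro exI[of _ "G z0 - z0"]) auto
qed

definition beta0 :: real where "beta0 = (SOME \<beta>. \<beta> > 0 \<and> (\<forall>z. eps/2 \<le> z \<and> z \<le> 2*eps \<longrightarrow> \<beta> \<le> G z - z))"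

lemma beta0: "beta0 > 0" "eps/2 \<le> z \<Longrightarrow> z \<le> 2*eps \<Longrightarrow> beta0 \<le> G z - z"
proof -
  have "beta0 > 0 \<and> (\<forall>z. eps/2 \<le> z \<and> z \<le> 2*eps \<longrightarrow> beta0 \<le> G z - z)"
    unfolding beta0_def using someI_ex[OF beta_ex] by simp
  then show "beta0 > 0" "eps/2 \<le> z \<Longrightarrow> z \<le> 2*eps \<Longrightarrow> beta0 \<le> G z - z" by auto
qed

lemma sig_ex: "\<exists>\<sigma> lam. 0 < \<sigma> \<and> \<sigma> \<le> eps/2 \<and> \<sigma> < -p \<and> 1 < lam \<and>
     (\<forall>z. eps - \<sigma> \<le> z \<and> z \<le> 1 + p + \<sigma> \<longrightarrow> lam \<le> f z)"
proof -
  have f1p: "f (1 + p) > 1" using expand_direct[of "1+p"] p_lo by simp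
  have "f \<midarrow>(1+p)\<rightarrow> f (1+p)" using f_isCont isCont_def by blast
  then obtain s where s: "s > 0" "\<And>x. x \<noteq> 1+p \<and> norm (x - (1+p)) < s \<Longrightarrow> norm (f x - f (1+p)) < f (1+p) - 1"
    unfolding LIM_eq using f1p by (metis diff_gt_0_iff_gt)
  define \<sigma> where "\<sigma> = min (min (s/2) (eps/2)) (-p/2)"
  have sig: "0 < \<sigma>" "\<sigma> \<le> eps/2" "\<sigma> < -p" "\<sigma> < s"
    using s eps_pos p_hi by (auto simp: \<sigma>_def min_def)
  have gt1: "f z > 1" if "eps - \<sigma> \<le> z" "z \<le> 1 + p + \<sigma>" for z
  proof (cases "z \<le> 1 + p")
    case True
    then show ?thesis using expand_direct[of z] that sig eps_pos by simp
  next
    case False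
    show ?thesis
    proof (cases "z = 1 + p")
      case True then show ?thesis using f1p by simp
    next
      case ne: False
      have "norm (z - (1+p)) < s" using False that sig by simp
      then have "norm (f z - f (1+p)) < f (1+p) - 1" using s ne by blast
      then have "\<bar>f z - f (1+p)\<bar> < f (1+p) - 1" by simp
      then show ?thesis using abs_ge_minus_self[of "f z - f (1+p)"] by linarith
    qed
  qed
  have cont: "continuous_on {eps - \<sigma>..1 + p + \<sigma>} f"
    using f_isCont by (simp add: continuous_at_imp_continuous_on)
  have ne: "{eps - \<sigma>..1 + p + \<sigma>} \<noteq> {}" using sig eps_p by simp
  obtain z0 where z0: "z0 \<in> {eps - \<sigma>..1 + p + \<sigma>}" "\<forall>y\<in>{eps - \<sigma>..1 + p + \<sigma>}. f z0 \<le> f y"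
    using continuous_attains_inf[OF compact_Icc ne cont] by blast
  have "f z0 > 1" using gt1 z0(1) by simp
  then show ?thesis using sig z0 by (intro exI[of _ \<sigma>] exI[of _ "f z0"]) auto
qed

definition sig :: real where "sig = (SOME \<sigma>. \<exists>lam. 0 < \<sigma> \<and> \<sigma> \<le> eps/2 \<and> \<sigma> < -p \<and> 1 < lam \<and>
     (\<forall>z. eps - \<sigma> \<le> z \<and> z \<le> 1 + p + \<sigma> \<longrightarrow> lam \<le> f z))"

definition lam :: real where "lam = (SOME lam. 0 < sig \<and> sig \<le> eps/2 \<and> sig < -p \<and> 1 < lam \<and>
     (\<forall>z. eps - sig \<le> z \<and> z \<le> 1 + p + sig \<longrightarrow> lam \<le> f z))"

lemma sig_lam: "0 < sig" "sig \<le> eps/2" "sig < -p" "1 < lam"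
   "eps - sig \<le> z \<Longrightarrow> z \<le> 1 + p + sig \<Longrightarrow> lam \<le> f z"
proof -
  have "\<exists>lam. 0 < sig \<and> sig \<le> eps/2 \<and> sig < -p \<and> 1 < lam \<and>
     (\<forall>z. eps - sig \<le> z \<and> z \<le> 1 + p + sig \<longrightarrow> lam \<le> f z)"
    unfolding sig_def by (rule someI_ex[OF sig_ex])
  then have "0 < sig \<and> sig \<le> eps/2 \<and> sig < -p \<and> 1 < lam \<and>
     (\<forall>z. eps - sig \<le> z \<and> z \<le> 1 + p + sig \<longrightarrow> lam \<le> f z)"
    unfolding lam_def by (rule someI_ex)
  then show "0 < sig" "sig \<le> eps/2" "sig < -p" "1 < lam"
   "eps - sig \<le> z \<Longrightarrow> z \<le> 1 + p + sig \<Longrightarrow> lam \<le> f z" by auto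
qed

lemma f_R: assumes "of_int m + eps - sig \<le> z" "z \<le> of_int m + 1 + p + sig"
  shows "lam \<le> f z"
proof -
  have "f z = f ((z - of_int m) + of_int m)" by simp
  also have "\<dots> = f (z - of_int m)" by (rule f_periodic)
  finally show ?thesis using sig_lam(5)[of "z - of_int m"] assms by simp
qed

lemma kappa_ex: "\<exists>\<kappa>>0. \<forall>z. 0 \<le> z \<and> z \<le> 1 + p \<longrightarrow> 1 + \<kappa> * z \<le> f z"
proof -
  define c where "c = min e0 (1 + p)"
  have c: "0 < c" "c \<le> 1 + p" "c \<le> e0" using e0_pos p_lo by (auto simp: c_def)
  have cont: "continuous_on {c..1 + p} f"
    using f_isCont by (simp add: continuous_at_imp_continuous_on)
  have ne: "{c..1 + p} \<noteq> {}" using c by simp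
  obtain z0 where z0: "z0 \<in> {c..1 + p}" "\<forall>y\<in>{c..1 + p}. f z0 \<le> f y"
    using continuous_attains_inf[OF compact_Icc ne cont] by blast
  have mu: "f z0 > 1" using expand_direct[of z0] z0(1) c by simp
  define \<kappa> where "\<kappa> = min (f2 0 / 2) (f z0 - 1)"
  have kpos: "\<kappa> > 0" using mu f20 by (simp add: \<kappa>_def)
  have "1 + \<kappa> * z \<le> f z" if "0 \<le> z" "z \<le> 1 + p" for z
  proof (cases "z \<le> c")
    case True
    have "\<kappa> \<le> f2 0 / 2" unfolding \<kappa>_def by (rule min.cobounded1)
    then have "\<kappa> * z \<le> (f2 0 / 2) * z" using that by (intro mult_right_mono) auto
    then show ?thesis using f_right[of z] True c that by linarith
  next
    case False
    have "z \<le> 1" using that p_hi by simp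
    have "\<kappa> * z \<le> \<kappa> * 1" using kpos \<open>z \<le> 1\<close> by (intro mult_left_mono) auto
    also have "\<dots> \<le> f z0 - 1" by (simp add: \<kappa>_def)
    finally have h: "\<kappa> * z \<le> f z0 - 1" .
    have "f z0 \<le> f z" using z0(2) False that by auto
    then show ?thesis using h by linarith
  qed
  then show ?thesis using kpos by blast
qed

definition kap :: real where "kap = (SOME \<kappa>. \<kappa> > 0 \<and> (\<forall>z. 0 \<le> z \<and> z \<le> 1 + p \<longrightarrow> 1 + \<kappa> * z \<le> f z))"

lemma kap: "kap > 0" "0 \<le> z \<Longrightarrow> z \<le> 1 + p \<Longrightarrow> 1 + kap * z \<le> f z"
proof -
  have "kap > 0 \<and> (\<forall>z. 0 \<le> z \<and> z \<le> 1 + p \<longrightarrow> 1 + kap * z \<le> f z)"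
    unfolding kap_def using someI_ex[OF kappa_ex] by simp
  then show "kap > 0" "0 \<le> z \<Longrightarrow> z \<le> 1 + p \<Longrightarrow> 1 + kap * z \<le> f z" by auto
qed

lemma kap_shift: assumes "of_int m \<le> z" "z \<le> of_int m + 1 + p"
  shows "1 + kap * (z - of_int m) \<le> f z"
proof -
  have "f z = f ((z - of_int m) + of_int m)" by simp
  also have "\<dots> = f (z - of_int m)" by (rule f_periodic)
  finally show ?thesis using kap(2)[of "z - of_int m"] assms by simp
qed



definition Uset :: "real set" where "Uset = (\<Union>m::int. {of_int m + p <..< of_int m})"
definition Oset :: "real set" where "Oset = {z. \<exists>k. (G^^k) z \<in> Uset}"

lemma Uset_shift: "z \<in> Uset \<Longrightarrow> z + of_int m \<in> Uset"
proof -
  assume "z \<in> Uset"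
  then obtain m' :: int where "z \<in> {of_int m' + p <..< of_int m'}" unfolding Uset_def by (rule UN_E)
  then have h: "of_int m' + p < z" "z < of_int m'" by simp_all
  have "z + of_int m \<in> {of_int (m' + m) + p <..< of_int (m' + m)}" using h by simp
  then show ?thesis unfolding Uset_def by (rule UN_I[OF UNIV_I])
qed

lemma Oset_shift: "z \<in> Oset \<Longrightarrow> z + of_int m \<in> Oset"
proof -
  assume "z \<in> Oset"
  then obtain k where "(G^^k) z \<in> Uset" by (auto simp: Oset_def)
  then have "(G^^k) z + of_int (m * d ^ k) \<in> Uset" by (rule Uset_shift)
  then have "(G^^k) (z + of_int m) \<in> Uset" by (simp add: Gn_shift)
  then show ?thesis unfolding Oset_def by blast
qed

lemma Oset_back: "(G^^n) z \<in> Oset \<Longrightarrow> z \<in> Oset"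
proof -
  assume "(G^^n) z \<in> Oset"
  then obtain k where "(G^^k) ((G^^n) z) \<in> Uset" by (auto simp: Oset_def)
  then have "(G^^(k + n)) z \<in> Uset" by (simp add: funpow_add)
  then show ?thesis unfolding Oset_def by blast
qed

lemma Uset_open: "open Uset"
proof -
  show ?thesis unfolding Uset_def by (rule open_UN) simp
qed

lemma Oset_open: "open Oset"
proof -
  have "Oset = (\<Union>k. (G^^k) -` Uset)" unfolding Oset_def by auto
  moreover have "open ((G^^k) -` Uset)" for k
    by (rule continuous_open_vimage[OF Uset_open]) (rule Gn_isCont)
  ultimately show ?thesis by auto
qed

lemma Oset_borel: "Oset \<in> sets borel"
  using Oset_open by simp

lemma avoid_bound:
  assumes "u < v" "\<And>z. u < z \<Longrightarrow> z < v \<Longrightarrow> z \<notin> Uset"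
  shows "of_int \<lfloor>u\<rfloor> \<le> u \<and> v \<le> of_int \<lfloor>u\<rfloor> + 1 + p"
proof (rule conjI)
  show "of_int \<lfloor>u\<rfloor> \<le> u" by simp
  show "v \<le> of_int \<lfloor>u\<rfloor> + 1 + p"
  proof (rule ccontr)
    define m where "m = \<lfloor>u\<rfloor>"
    assume "\<not> v \<le> of_int \<lfloor>u\<rfloor> + 1 + p"
    then have v: "of_int m + 1 + p < v" by (simp add: m_def)
    have u1: "u < of_int m + 1" by (simp add: m_def)
    define A where "A = max u (of_int m + 1 + p)"
    define B where "B = min v (of_int m + 1)"
    define z where "z = (A + B) / 2"
    have AB: "A < B" using v u1 assms(1) p_hi by (simp add: A_def B_def)
    have zA: "A < z" unfolding z_def using AB by (simp add: field_simps)
    have zB: "z < B" unfolding z_def using AB by (simp add: field_simps)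
    have z1: "u < z" "of_int m + 1 + p < z" using zA by (auto simp: A_def)
    have z2: "z < v" "z < of_int m + 1" using zB by (auto simp: B_def)
    have "z \<in> {of_int (m + 1) + p <..< of_int (m + 1)}" using z1 z2 by simp
    then have "z \<in> Uset" unfolding Uset_def by (rule UN_I[OF UNIV_I])
    moreover have "u < z" "z < v" using z1 z2 by auto
    ultimately show False using assms(2) by blast
  qed
qed

lemma grow_step:
  assumes "u < v" "\<And>z. u < z \<Longrightarrow> z < v \<Longrightarrow> z \<notin> Uset"
  shows "G v - G u \<ge> (v - u) + kap * (v - u)^2 / 4"
proof -
  define m where "m = \<lfloor>u\<rfloor>"
  have mb: "of_int m \<le> u" "v \<le> of_int m + 1 + p" using avoid_bound[OF assms] by (auto simp: m_def)
  define w where "w = (u + v) / 2"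
  have w: "u < w" "w < v" using assms(1) by (auto simp: w_def)
  obtain \<xi>1 where x1: "u < \<xi>1" "\<xi>1 < w" "G w - G u = (w - u) * f \<xi>1"
    using MVT2[OF w(1), of G f] Gd by blast
  obtain \<xi>2 where x2: "w < \<xi>2" "\<xi>2 < v" "G v - G w = (v - w) * f \<xi>2"
    using MVT2[OF w(2), of G f] Gd by blast
  have f1: "f \<xi>1 \<ge> 1"
  proof -
    have "1 + kap * (\<xi>1 - of_int m) \<le> f \<xi>1" using kap_shift[of m \<xi>1] mb x1 w by simp
    moreover have "kap * (\<xi>1 - of_int m) \<ge> 0" using kap(1) x1 mb by simp
    ultimately show ?thesis by linarith
  qed
  have f2: "f \<xi>2 \<ge> 1 + kap * ((v - u) / 2)"
  proof -
    have "1 + kap * (\<xi>2 - of_int m) \<le> f \<xi>2" using kap_shift[of m \<xi>2] mb x2 w by simp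
    moreover have "kap * ((v - u) / 2) \<le> kap * (\<xi>2 - of_int m)"
      using kap(1) mb x2 w by (intro mult_left_mono) (auto simp: w_def)
    ultimately show ?thesis by linarith
  qed
  have "G w - G u \<ge> (w - u)" using x1(3) f1 w by (simp add: mult_le_cancel_left1)
  moreover have "G v - G w \<ge> (v - w) * (1 + kap * ((v - u) / 2))"
    using x2(3) f2 w by (simp add: mult_left_mono)
  moreover have "(v - w) * (1 + kap * ((v - u) / 2)) = (v - w) + kap * (v - u)^2 / 4"
    unfolding w_def power2_eq_square by (simp add: field_simps)
  moreover have "(w - u) + (v - w) = v - u" by simp
  ultimately show ?thesis by linarith
qed

lemma O_dense: assumes "u < v" shows "\<exists>z. u < z \<and> z < v \<and> z \<in> Oset"
proof (rule ccontr)
  assume no: "\<not> (\<exists>z. u < z \<and> z < v \<and> z \<in> Oset)"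
  define l where "l k = (G^^k) v - (G^^k) u" for k
  have av: "\<And>z. (G^^k) u < z \<Longrightarrow> z < (G^^k) v \<Longrightarrow> z \<notin> Uset" for k
  proof -
    fix z assume z: "(G^^k) u < z" "z < (G^^k) v"
    obtain y where y: "(G^^k) y = z" using Gn_surj by blast
    have "u < y" "y < v" using z y Gn_less_iff by auto
    then have "y \<notin> Oset" using no by blast
    then show "z \<notin> Uset" using y unfolding Oset_def by blast
  qed
  have lt: "(G^^k) u < (G^^k) v" for k using Gn_strict assms by simp
  have st: "l (Suc k) \<ge> l k + kap * (l k)^2 / 4" for k
    using grow_step[OF lt[of k] av[of k]] by (simp add: l_def)
  have l0: "l 0 > 0" using assms by (simp add: l_def)
  have mono: "l k \<ge> l 0" for k
  proof (induction k)
    case (Suc k)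
    have "kap * (l k)^2 / 4 \<ge> 0" using kap(1) by simp
    then show ?case using st[of k] Suc by linarith
  qed simp
  define c where "c = kap * (l 0)^2 / 4"
  have lin: "l k \<ge> l 0 + of_nat k * c" for k
  proof (induction k)
    case (Suc k)
    have "(l 0)^2 \<le> (l k)^2" using mono[of k] l0 by (intro power_mono) auto
    then have c1: "c \<le> kap * (l k)^2 / 4" unfolding c_def using kap(1)
      by (intro divide_right_mono mult_left_mono) auto
    have "of_nat (Suc k) * c = of_nat k * c + c" by (simp add: distrib_right)
    then show ?case using st[of k] Suc c1 by linarith
  qed simp
  have ub: "l k \<le> 1" for k
  proof -
    have h1: "(G^^k) v \<le> of_int \<lfloor>(G^^k) u\<rfloor> + 1 + p"
      using avoid_bound[OF lt[of k] av[of k]] by auto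
    have h2: "of_int \<lfloor>(G^^k) u\<rfloor> \<le> (G^^k) u" by (rule of_int_floor_le)
    show ?thesis unfolding l_def using h1 h2 p_hi by linarith
  qed
  have cpos: "c > 0" using kap(1) l0 by (simp add: c_def)
  obtain k :: nat where "of_nat k > 1 / c" using reals_Archimedean2 by blast
  then have "of_nat k * c > 1" using cpos by (simp add: field_simps)
  then show False using lin[of k] ub[of k] l0 by linarith
qed



lemma funpow_comp_apply: "(G^^a) ((G^^b) z) = (G^^(a + b)) z"
  by (simp add: funpow_add)

definition Hc :: real where "Hc = 2 * eps * exp (Lc * (2 * eps)) / beta0"

lemma Hc_pos: "Hc > 0"
  using eps_pos beta0(1) by (simp add: Hc_def)

lemma PE:
  assumes a0: "0 < \<alpha>" and ab: "\<alpha> \<le> \<beta>" and b2: "(G^^M) \<beta> \<le> 2 * eps"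
    and a2: "eps/2 \<le> (G^^M) \<alpha>" and lb: "(G^^M) \<beta> - (G^^M) \<alpha> \<le> beta0"
  shows "(\<Sum>i<M. (G^^i) \<beta> - (G^^i) \<alpha>) \<le> Hc * ((G^^M) \<beta> - (G^^M) \<alpha>)"
    and "\<beta> - \<alpha> \<le> (G^^M) \<beta> - (G^^M) \<alpha>"
proof -
  define l where "l = (G^^M) \<beta> - (G^^M) \<alpha>"
  define E2 where "E2 = exp (Lc * (2 * eps))"
  have E2pos: "E2 > 0" by (simp add: E2_def)
  have b0: "0 < \<beta>" using a0 ab by simp
  have bup: "(G^^i) \<beta> \<le> (G^^M) \<beta>" if "i \<le> M" for i
    using orbit_up[OF b0 b2 eps_e0 that] .
  have apos: "0 < (G^^i) \<alpha>" for i using Gn_pos[OF a0] .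
  have ale: "(G^^i) \<alpha> \<le> (G^^i) \<beta>" for i using Gn_mono[OF ab] .
  have grow: "(G^^i) \<beta> - (G^^i) \<alpha> \<le> (G^^Suc i) \<beta> - (G^^Suc i) \<alpha>" if "i < M" for i
  proof -
    obtain \<xi> where xi: "(G^^i) \<alpha> \<le> \<xi>" "\<xi> \<le> (G^^i) \<beta>"
      "(G^^1) ((G^^i) \<beta>) - (G^^1) ((G^^i) \<alpha>) = Dn 1 \<xi> * ((G^^i) \<beta> - (G^^i) \<alpha>)"
      using MVT_Gn[OF ale[of i], of 1] by blast
    have "\<xi> \<le> 2 * eps" using xi bup[of i] that b2 by simp
    then have "f \<xi> \<ge> 1" using f_ge1_right[of \<xi>] xi apos[of i] eps_e0 by simp
    then have "Dn 1 \<xi> \<ge> 1" by (simp add: Dn_def)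
    then have "(G^^i) \<beta> - (G^^i) \<alpha> \<le> Dn 1 \<xi> * ((G^^i) \<beta> - (G^^i) \<alpha>)"
      using ale[of i] by (simp add: mult_le_cancel_right1)
    then show ?thesis using xi(3) by simp
  qed
  have growall: "\<beta> - \<alpha> \<le> (G^^i) \<beta> - (G^^i) \<alpha>" if "i \<le> M" for i
    using that
  proof (induction i)
    case (Suc i)
    then show ?case using grow[of i] by simp
  qed simp
  show "\<beta> - \<alpha> \<le> (G^^M) \<beta> - (G^^M) \<alpha>" using growall[of M] by simp
  have aM2: "(G^^M) \<alpha> \<le> 2 * eps" using ale[of M] b2 by simp
  have fund: "(G^^M) \<beta> \<le> G ((G^^M) \<alpha>)"
    using beta0(2)[OF a2 aM2] lb by simp
  have fund_i: "(G^^i) \<beta> \<le> (G^^Suc i) \<alpha>" if "i \<le> M" for i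
  proof -
    have "(G^^(M - i)) ((G^^i) \<beta>) = (G^^M) \<beta>" using that by (simp add: funpow_comp_apply)
    moreover have "(G^^(M - i)) ((G^^Suc i) \<alpha>) = G ((G^^M) \<alpha>)"
    proof -
      have "(G^^(M - i)) ((G^^Suc i) \<alpha>) = (G^^(M - i + Suc i)) \<alpha>" by (rule funpow_comp_apply)
      also have "M - i + Suc i = Suc M" using that by simp
      finally show ?thesis by simp
    qed
    ultimately have "(G^^(M - i)) ((G^^i) \<beta>) \<le> (G^^(M - i)) ((G^^Suc i) \<alpha>)" using fund by simp
    then show ?thesis using Gn_le_iff by blast
  qed
  have trm: "((G^^i) \<beta> - (G^^i) \<alpha>) * beta0 \<le> E2 * l * ((G^^Suc i) \<alpha> - (G^^i) \<alpha>)" if "i < M" for i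
  proof -
    define u where "u = (G^^i) \<alpha>"
    define v where "v = (G^^i) \<beta>"
    define w where "w = (G^^Suc i) \<alpha>"
    define N where "N = M - i"
    have uv: "u \<le> v" using ale by (simp add: u_def v_def)
    have vw: "v \<le> w" using fund_i[of i] that by (simp add: v_def w_def)
    have uw: "u \<le> w" using uv vw by simp
    have Nv: "(G^^N) v = (G^^M) \<beta>" using that by (simp add: N_def v_def funpow_comp_apply)
    have Nu: "(G^^N) u = (G^^M) \<alpha>" using that by (simp add: N_def u_def funpow_comp_apply)
    have Nw: "(G^^N) w = G ((G^^M) \<alpha>)"
    proof -
      have "(G^^N) w = (G^^(N + Suc i)) \<alpha>" unfolding w_def by (rule funpow_comp_apply)
      also have "N + Suc i = Suc M" using that by (simp add: N_def)
      finally show ?thesis by simp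
    qed
    obtain \<xi> where xi: "u \<le> \<xi>" "\<xi> \<le> v" "(G^^N) v - (G^^N) u = Dn N \<xi> * (v - u)"
      using MVT_Gn[OF uv, of N] by blast
    obtain \<zeta> where ze: "u \<le> \<zeta>" "\<zeta> \<le> w" "(G^^N) w - (G^^N) u = Dn N \<zeta> * (w - u)"
      using MVT_Gn[OF uw, of N] by blast
    have tel: "(\<Sum>j<N. (G^^j) w - (G^^j) u) = (G^^M) \<alpha> - (G^^i) \<alpha>"
    proof -
      have e1: "(G^^j) w = (G^^(Suc j + i)) \<alpha>" for j
      proof -
        have "(G^^j) w = (G^^(j + Suc i)) \<alpha>" unfolding w_def by (rule funpow_comp_apply)
        also have "j + Suc i = Suc j + i" by simp
        finally show ?thesis .
      qed
      have e2: "(G^^j) u = (G^^(j + i)) \<alpha>" for j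
        unfolding u_def by (rule funpow_comp_apply)
      have "(\<Sum>j<N. (G^^j) w - (G^^j) u) = (\<Sum>j<N. (G^^(Suc j + i)) \<alpha> - (G^^(j + i)) \<alpha>)"
        by (simp only: e1 e2)
      also have "\<dots> = (G^^(N + i)) \<alpha> - (G^^(0 + i)) \<alpha>"
        by (rule sum_lessThan_telescope[where f = "\<lambda>j. (G^^(j + i)) \<alpha>"])
      also have "N + i = M" using that by (simp add: N_def)
      finally show ?thesis by simp
    qed
    have "(G^^M) \<alpha> - (G^^i) \<alpha> \<le> 2 * eps" using aM2 apos[of i] by simp
    then have "exp (Lc * (\<Sum>j<N. (G^^j) w - (G^^j) u)) \<le> E2"
      unfolding tel E2_def using Lc(1) by (simp add: mult_left_mono)
    moreover have "Dn N \<zeta> \<le> exp (Lc * (\<Sum>j<N. (G^^j) w - (G^^j) u)) * Dn N \<xi>"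
      using distortion[of u \<zeta> w \<xi> N] ze xi vw by simp
    ultimately have dz: "Dn N \<zeta> \<le> E2 * Dn N \<xi>"
      using Dn_pos[of N \<xi>] by (meson dual_order.trans mult_right_mono less_imp_le)
    have bd: "beta0 \<le> (G^^N) w - (G^^N) u"
      using Nw Nu beta0(2)[OF a2 aM2] by simp
    have "(v - u) * beta0 \<le> (v - u) * ((G^^N) w - (G^^N) u)"
      using uv bd by (intro mult_left_mono) auto
    also have "\<dots> = (v - u) * (w - u) * Dn N \<zeta>" using ze(3) by simp
    also have "\<dots> \<le> (v - u) * (w - u) * (E2 * Dn N \<xi>)"
      using uv uw dz by (intro mult_left_mono) auto
    also have "\<dots> = E2 * (Dn N \<xi> * (v - u)) * (w - u)" by (simp add: algebra_simps)
    also have "\<dots> = E2 * l * (w - u)" using xi(3) Nv Nu by (simp add: l_def)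
    finally show ?thesis by (simp add: u_def v_def w_def)
  qed
  have "(\<Sum>i<M. (G^^i) \<beta> - (G^^i) \<alpha>) * beta0 = (\<Sum>i<M. ((G^^i) \<beta> - (G^^i) \<alpha>) * beta0)"
    by (simp add: sum_distrib_right)
  also have "\<dots> \<le> (\<Sum>i<M. E2 * l * ((G^^Suc i) \<alpha> - (G^^i) \<alpha>))"
    by (rule sum_mono) (use trm in auto)
  also have "\<dots> = E2 * l * (\<Sum>i<M. (G^^Suc i) \<alpha> - (G^^i) \<alpha>)"
    by (simp add: sum_distrib_left)
  also have "(\<Sum>i<M. (G^^Suc i) \<alpha> - (G^^i) \<alpha>) = (G^^M) \<alpha> - (G^^0) \<alpha>"
    by (rule sum_lessThan_telescope)
  also have "E2 * l * ((G^^M) \<alpha> - (G^^0) \<alpha>) \<le> E2 * l * (2 * eps)"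
  proof -
    have "l \<ge> 0" using ale[of M] by (simp add: l_def)
    moreover have "(G^^M) \<alpha> - (G^^0) \<alpha> \<le> 2 * eps" using aM2 a0 by simp
    ultimately show ?thesis using E2pos by (intro mult_left_mono) auto
  qed
  finally have "(\<Sum>i<M. (G^^i) \<beta> - (G^^i) \<alpha>) * beta0 \<le> E2 * l * (2 * eps)" .
  then show "(\<Sum>i<M. (G^^i) \<beta> - (G^^i) \<alpha>) \<le> Hc * ((G^^M) \<beta> - (G^^M) \<alpha>)"
    using beta0(1) by (simp add: Hc_def E2_def l_def field_simps)
qed


definition lstar :: real where "lstar = min (min beta0 (eps/2)) (sig/2)"
definition rho :: real where "rho = lstar / 2"
definition Qc :: real where "Qc = (1 + Hc * lam) / (lam - 1)"

lemma lstar_pos: "lstar > 0" and lstar_le: "lstar \<le> beta0" "lstar \<le> eps/2" "lstar \<le> sig/2"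
  using beta0(1) eps_pos sig_lam(1) by (auto simp: lstar_def)

lemma rho_pos: "rho > 0" and rho_eps: "rho < eps" and rho_p: "rho < -p" and rho_l: "2 * rho = lstar"
  using lstar_pos lstar_le eps_pos sig_lam(3) sig_lam(1) by (auto simp: rho_def)

lemma Qc_pos: "Qc > 0"
proof -
  have "Hc * lam > 0" using Hc_pos sig_lam(4) by simp
  then have "1 + Hc * lam > 0" by simp
  moreover have "lam - 1 > 0" using sig_lam(4) by simp
  ultimately show ?thesis unfolding Qc_def by (rule divide_pos_pos)
qed

lemma Qc_eq: "Qc * (1 - 1 / lam) = 1 / lam + Hc"
  using sig_lam(4) by (simp add: Qc_def field_simps)

lemma G_frac_split: "G z = G (frac z) + of_int (\<lfloor>z\<rfloor> * d)"
proof -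
  have "G z = G (frac z + of_int \<lfloor>z\<rfloor>)" by (simp add: frac_def)
  also have "\<dots> = G (frac z) + of_int \<lfloor>z\<rfloor> * of_int d" by (rule G_shift)
  finally show ?thesis by simp
qed

lemma exc_step:
  assumes "0 < frac z" "frac z < eps"
  shows "\<lfloor>G z\<rfloor> = \<lfloor>z\<rfloor> * d" "frac (G z) = G (frac z)"
proof -
  have g0: "0 < G (frac z)" using Gn_pos[OF assms(1), of 1] by simp
  have g1: "G (frac z) < 1" using G_le_eps[of "frac z"] assms eps_small by simp
  have e: "G z = G (frac z) + of_int (\<lfloor>z\<rfloor> * d)" by (rule G_frac_split)
  show fl: "\<lfloor>G z\<rfloor> = \<lfloor>z\<rfloor> * d" unfolding e using g0 g1 by (intro floor_unique) auto
  have "frac (G z) = G z - of_int (\<lfloor>z\<rfloor> * d)" using fl by (simp add: frac_def)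
  with e show "frac (G z) = G (frac z)" by simp
qed

lemma red_step: "G w - of_int (\<lfloor>z\<rfloor> * d) = G (w - of_int \<lfloor>z\<rfloor>)"
proof -
  have "G w = G ((w - of_int \<lfloor>z\<rfloor>) + of_int \<lfloor>z\<rfloor>)" by simp
  also have "\<dots> = G (w - of_int \<lfloor>z\<rfloor>) + of_int \<lfloor>z\<rfloor> * of_int d" by (rule G_shift)
  finally show ?thesis by simp
qed

lemma eta_ex: "\<exists>\<eta>>0. \<forall>c (m::int). eps \<le> c \<and> c \<le> 1 + p \<longrightarrow>
    ennreal \<eta> \<le> emeasure lborel (Oset \<inter> {of_int m + c - rho .. of_int m + c + rho})"
proof -
  define h where "h = rho / 2"
  have h0: "h > 0" using rho_pos by (simp add: h_def)
  define N where "N = nat \<lceil>(1 + p - eps) / h\<rceil>"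
  define cp where "cp i = eps + of_nat i * h" for i :: nat
  define Pp where "Pp i w \<longleftrightarrow> (\<exists>z. {z - w .. z + w} \<subseteq> Oset \<and> cp i - h \<le> z - w \<and> z + w \<le> cp i + h)" for i w
  have each: "\<exists>w>0. Pp i w" for i
  proof -
    obtain z where z: "cp i - h < z" "z < cp i + h" "z \<in> Oset" using O_dense[of "cp i - h" "cp i + h"] h0 by auto
    obtain e where e: "e > 0" "ball z e \<subseteq> Oset" using Oset_open z(3) openE by blast
    define w where "w = min (e/2) (min (z - (cp i - h)) (cp i + h - z))"
    have w0: "w > 0" using e z by (simp add: w_def)
    have "{z - w .. z + w} \<subseteq> ball z e"
    proof
      fix t assume "t \<in> {z - w .. z + w}"
      then have "\<bar>t - z\<bar> \<le> w" by auto
      also have "\<dots> < e" using e(1) by (simp add: w_def)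
      finally show "t \<in> ball z e" by (simp add: dist_real_def abs_minus_commute)
    qed
    then have "{z - w .. z + w} \<subseteq> Oset" using e(2) by simp
    moreover have "cp i - h \<le> z - w" "z + w \<le> cp i + h" by (auto simp: w_def)
    ultimately show ?thesis using w0 unfolding Pp_def by blast
  qed
  have mono: "Pp i w'" if P: "Pp i w" and ww: "0 < w'" "w' \<le> w" for i w w'
  proof -
    obtain z where z: "{z - w .. z + w} \<subseteq> Oset" "cp i - h \<le> z - w" "z + w \<le> cp i + h"
      using P unfolding Pp_def by blast
    have "{z - w' .. z + w'} \<subseteq> {z - w .. z + w}" using ww by auto
    then show ?thesis unfolding Pp_def using z ww by (intro exI[of _ z]) auto
  qed
  have fin: "\<exists>w>0. \<forall>i\<le>K. Pp i w" for K
  proof (induction K)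
    case 0 then show ?case using each[of 0] by auto
  next
    case (Suc K)
    obtain w1 where w1: "w1 > 0" "\<forall>i\<le>K. Pp i w1" using Suc by blast
    obtain w2 where w2: "w2 > 0" "Pp (Suc K) w2" using each by blast
    have "\<forall>i\<le>Suc K. Pp i (min w1 w2)"
    proof (intro allI impI)
      fix i assume "i \<le> Suc K"
      then consider "i \<le> K" | "i = Suc K" by linarith
      then show "Pp i (min w1 w2)"
      proof cases
        case 1 then show ?thesis using mono[of i w1 "min w1 w2"] w1 w2 by simp
      next
        case 2 then show ?thesis using mono[of i w2 "min w1 w2"] w1 w2 by simp
      qed
    qed
    then show ?case using w1 w2 by (intro exI[of _ "min w1 w2"]) auto
  qed
  obtain w where w: "w > 0" "\<And>i. i \<le> N \<Longrightarrow> Pp i w" using fin[of N] by blast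
  have "ennreal (2 * w) \<le> emeasure lborel (Oset \<inter> {of_int m + c - rho .. of_int m + c + rho})"
    if c: "eps \<le> c" "c \<le> 1 + p" for c and m :: int
  proof -
    define i where "i = nat \<lfloor>(c - eps) / h\<rfloor>"
    have q0: "0 \<le> (c - eps) / h" using c h0 by simp
    have i1: "of_nat i \<le> (c - eps) / h" using q0 by (simp add: i_def)
    have i2: "(c - eps) / h < of_nat i + 1" using q0 by (simp add: i_def)
    have iN: "i \<le> N"
    proof -
      have "(c - eps) / h \<le> (1 + p - eps) / h" using c h0 by (simp add: divide_right_mono)
      then have "\<lfloor>(c - eps) / h\<rfloor> \<le> \<lceil>(1 + p - eps) / h\<rceil>"
        by (meson floor_le_ceiling floor_mono order_trans)
      then show ?thesis by (simp add: i_def N_def nat_mono)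
    qed
    have ci1: "cp i \<le> c" using i1 h0 by (simp add: cp_def pos_le_divide_eq)
    have ci2: "c < cp i + h" using i2 h0 by (simp add: cp_def pos_divide_less_eq algebra_simps)
    obtain z where z: "{z - w .. z + w} \<subseteq> Oset" "cp i - h \<le> z - w" "z + w \<le> cp i + h"
      using w(2)[OF iN] unfolding Pp_def by blast
    have sub: "{z + of_int m - w .. z + of_int m + w} \<subseteq> Oset \<inter> {of_int m + c - rho .. of_int m + c + rho}"
    proof
      fix t assume t: "t \<in> {z + of_int m - w .. z + of_int m + w}"
      then have "t - of_int m \<in> Oset" using z(1) by auto
      then have "(t - of_int m) + of_int m \<in> Oset" by (rule Oset_shift)
      moreover have "t \<in> {of_int m + c - rho .. of_int m + c + rho}"
        using t z(2,3) ci1 ci2 by (auto simp: h_def)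
      ultimately show "t \<in> Oset \<inter> {of_int m + c - rho .. of_int m + c + rho}" by simp
    qed
    have "emeasure lborel {z + of_int m - w .. z + of_int m + w} = ennreal (2 * w)" using w(1) by simp
    moreover have "emeasure lborel {z + of_int m - w .. z + of_int m + w}
        \<le> emeasure lborel (Oset \<inter> {of_int m + c - rho .. of_int m + c + rho})"
      by (rule emeasure_mono[OF sub]) (use Oset_borel in auto)
    ultimately show ?thesis by simp
  qed
  then show ?thesis using w(1) by (intro exI[of _ "2 * w"]) auto
qed

definition eta :: real where "eta = (SOME \<eta>. \<eta> > 0 \<and> (\<forall>c (m::int). eps \<le> c \<and> c \<le> 1 + p \<longrightarrow>
    ennreal \<eta> \<le> emeasure lborel (Oset \<inter> {of_int m + c - rho .. of_int m + c + rho})))"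

lemma eta: "eta > 0" "eps \<le> c \<Longrightarrow> c \<le> 1 + p \<Longrightarrow>
    ennreal eta \<le> emeasure lborel (Oset \<inter> {of_int m + c - rho .. of_int m + c + rho})"
proof -
  have "eta > 0 \<and> (\<forall>c (m::int). eps \<le> c \<and> c \<le> 1 + p \<longrightarrow>
    ennreal eta \<le> emeasure lborel (Oset \<inter> {of_int m + c - rho .. of_int m + c + rho}))"
    unfolding eta_def by (rule someI_ex[OF eta_ex])
  then show "eta > 0" "eps \<le> c \<Longrightarrow> c \<le> 1 + p \<Longrightarrow>
    ennreal eta \<le> emeasure lborel (Oset \<inter> {of_int m + c - rho .. of_int m + c + rho})" by auto
qed

definition Edist :: real where "Edist = exp (Lc * (2 * rho * (Hc + Qc)))"

lemma Edist_pos: "Edist > 0" by (simp add: Edist_def)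

context
  fixes x a b :: real and n :: nat
  assumes orb: "\<And>k. 0 < frac ((G^^k) x) \<and> frac ((G^^k) x) \<le> 1 + p"
    and Rn: "eps \<le> frac ((G^^n) x)"
    and an: "(G^^n) a = (G^^n) x - rho" and bn: "(G^^n) b = (G^^n) x + rho"
begin

lemma ax_lt: "a < x" "x < b"
proof -
  have "(G^^n) a < (G^^n) x" "(G^^n) x < (G^^n) b" using an bn rho_pos by auto
  then show "a < x" "x < b" using Gn_less_iff by auto
qed

lemma ord_j: "(G^^j) a \<le> (G^^j) x" "(G^^j) x \<le> (G^^j) b"
  using ax_lt Gn_mono less_imp_le by blast+

lemma noint: assumes "j \<le> n" "(G^^j) a \<le> of_int m" "of_int m \<le> (G^^j) b" shows False
proof -
  have "(G^^(n - j)) ((G^^j) a) = (G^^n) a" using assms(1) by (simp add: funpow_comp_apply)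
  moreover have "(G^^(n - j)) ((G^^j) b) = (G^^n) b" using assms(1) by (simp add: funpow_comp_apply)
  ultimately have h: "(G^^n) a \<le> of_int (m * d ^ (n - j))" "of_int (m * d ^ (n - j)) \<le> (G^^n) b"
    using Gn_mono[OF assms(2), of "n - j"] Gn_mono[OF assms(3), of "n - j"] Gn_int[of "n - j" m] by auto
  define X where "X = (G^^n) x"
  have X: "X = of_int \<lfloor>X\<rfloor> + frac X" by (simp add: frac_def)
  have l: "of_int \<lfloor>X\<rfloor> < X - rho" using Rn rho_eps X by (simp add: X_def)
  have r: "X + rho < of_int \<lfloor>X\<rfloor> + 1" using orb[of n] rho_p X by (simp add: X_def)
  have "of_int \<lfloor>X\<rfloor> < (of_int (m * d ^ (n - j)) :: real)" using h l an by (simp add: X_def)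
  then have i1: "\<lfloor>X\<rfloor> < m * d ^ (n - j)" by linarith
  have "(of_int (m * d ^ (n - j)) :: real) < of_int \<lfloor>X\<rfloor> + 1" using h r bn by (simp add: X_def)
  then have i2: "m * d ^ (n - j) < \<lfloor>X\<rfloor> + 1" by linarith
  show False using i1 i2 by simp
qed

lemma fl_bounds: assumes "j \<le> n"
  shows "of_int \<lfloor>(G^^j) x\<rfloor> < (G^^j) a" "(G^^j) b < of_int \<lfloor>(G^^j) x\<rfloor> + 1"
proof -
  show "of_int \<lfloor>(G^^j) x\<rfloor> < (G^^j) a"
  proof (rule ccontr)
    assume "\<not> ?thesis"
    then have "(G^^j) a \<le> of_int \<lfloor>(G^^j) x\<rfloor>" by simp
    moreover have "of_int \<lfloor>(G^^j) x\<rfloor> \<le> (G^^j) b" using ord_j(2)[of j] of_int_floor_le[of "(G^^j) x"] by linarith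
    ultimately show False using noint[OF assms] by blast
  qed
  show "(G^^j) b < of_int \<lfloor>(G^^j) x\<rfloor> + 1"
  proof (rule ccontr)
    assume "\<not> ?thesis"
    then have "of_int (\<lfloor>(G^^j) x\<rfloor> + 1) \<le> (G^^j) b" by simp
    moreover have "(G^^j) a \<le> of_int \<lfloor>(G^^j) x\<rfloor> + 1"
      using ord_j(1)[of j] real_of_int_floor_add_one_gt[of "(G^^j) x"] by linarith
    then have "(G^^j) a \<le> of_int (\<lfloor>(G^^j) x\<rfloor> + 1)" by simp
    ultimately show False using noint[OF assms] by blast
  qed
qed


lemma excursion:
  assumes sk: "s \<le> k'" and kn: "k' \<le> n" and btw: "\<And>i. s \<le> i \<Longrightarrow> i < k' \<Longrightarrow> frac ((G^^i) x) < eps"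
    and Rk: "eps \<le> frac ((G^^k') x)" and lk: "(G^^k') b - (G^^k') a \<le> lstar"
  shows "(\<Sum>i\<in>{s..<k'}. (G^^i) b - (G^^i) a) \<le> Hc * ((G^^k') b - (G^^k') a)"
    "(G^^s) b - (G^^s) a \<le> (G^^k') b - (G^^k') a"
proof -
  define M where "M = k' - s"
  define m where "m = \<lfloor>(G^^s) x\<rfloor>"
  define \<alpha> where "\<alpha> = (G^^s) a - of_int m"
  define \<beta> where "\<beta> = (G^^s) b - of_int m"
  have red: "(G^^(s+i)) a - of_int \<lfloor>(G^^(s+i)) x\<rfloor> = (G^^i) \<alpha> \<and>
             (G^^(s+i)) b - of_int \<lfloor>(G^^(s+i)) x\<rfloor> = (G^^i) \<beta>" if "i \<le> M" for i
    using that
  proof (induction i)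
    case 0 then show ?case by (simp add: \<alpha>_def \<beta>_def m_def)
  next
    case (Suc i)
    have i: "s + i < k'" using Suc.prems by (simp add: M_def)
    have y: "0 < frac ((G^^(s+i)) x)" "frac ((G^^(s+i)) x) < eps" using orb btw[of "s+i"] i by auto
    have fl: "\<lfloor>G ((G^^(s+i)) x)\<rfloor> = \<lfloor>(G^^(s+i)) x\<rfloor> * d" using exc_step[OF y] by simp
    have IH: "(G^^(s+i)) a - of_int \<lfloor>(G^^(s+i)) x\<rfloor> = (G^^i) \<alpha>"
             "(G^^(s+i)) b - of_int \<lfloor>(G^^(s+i)) x\<rfloor> = (G^^i) \<beta>" using Suc by auto
    have "(G^^(s + Suc i)) a - of_int \<lfloor>(G^^(s + Suc i)) x\<rfloor>
          = G ((G^^(s+i)) a) - of_int (\<lfloor>(G^^(s+i)) x\<rfloor> * d)" using fl by simp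
    also have "\<dots> = G ((G^^(s+i)) a - of_int \<lfloor>(G^^(s+i)) x\<rfloor>)" by (rule red_step)
    finally have 1: "(G^^(s + Suc i)) a - of_int \<lfloor>(G^^(s + Suc i)) x\<rfloor> = (G^^Suc i) \<alpha>"
      using IH by simp
    have "(G^^(s + Suc i)) b - of_int \<lfloor>(G^^(s + Suc i)) x\<rfloor>
          = G ((G^^(s+i)) b) - of_int (\<lfloor>(G^^(s+i)) x\<rfloor> * d)" using fl by simp
    also have "\<dots> = G ((G^^(s+i)) b - of_int \<lfloor>(G^^(s+i)) x\<rfloor>)" by (rule red_step)
    finally have 2: "(G^^(s + Suc i)) b - of_int \<lfloor>(G^^(s + Suc i)) x\<rfloor> = (G^^Suc i) \<beta>"
      using IH by simp
    show ?case using 1 2 by simp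
  qed
  have lsum: "(G^^(s+i)) b - (G^^(s+i)) a = (G^^i) \<beta> - (G^^i) \<alpha>" if "i \<le> M" for i
    using red[OF that] by linarith
  have main: "(\<Sum>i\<in>{s..<k'}. (G^^i) b - (G^^i) a) \<le> Hc * ((G^^k') b - (G^^k') a) \<and>
        (G^^s) b - (G^^s) a \<le> (G^^k') b - (G^^k') a"
  proof (cases "M = 0")
    case True
    then have "s = k'" using sk by (simp add: M_def)
    moreover have "(G^^k') b - (G^^k') a \<ge> 0" using ord_j[of k'] by simp
    ultimately show ?thesis using Hc_pos by simp
  next
    case False
    have kM: "k' = s + M" using sk by (simp add: M_def)
    have sn: "s \<le> n" using sk kn by simp
    have a0: "0 < \<alpha>" using fl_bounds(1)[OF sn] by (simp add: \<alpha>_def m_def)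
    have ab: "\<alpha> \<le> \<beta>" using ord_j[of s] by (simp add: \<alpha>_def \<beta>_def)
    define X where "X = (G^^k') x"
    have redM: "(G^^M) \<alpha> = (G^^k') a - of_int \<lfloor>X\<rfloor>" "(G^^M) \<beta> = (G^^k') b - of_int \<lfloor>X\<rfloor>"
      using red[of M] kM by (auto simp: X_def)
    have Xf: "X = of_int \<lfloor>X\<rfloor> + frac X" by (simp add: frac_def)
    have prev: "frac X \<le> 3/2 * eps"
    proof -
      obtain M' where M': "M = Suc M'" using False by (cases M) auto
      define j where "j = s + M'"
      have j: "k' = Suc j" using kM M' by (simp add: j_def)
      have y: "0 < frac ((G^^j) x)" "frac ((G^^j) x) < eps" using orb btw[of j] j by (auto simp: j_def)
      have "frac X = G (frac ((G^^j) x))" using exc_step(2)[OF y] j by (simp add: X_def)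
      also have "\<dots> \<le> 3/2 * eps" using G_le_eps[of "frac ((G^^j) x)"] y by simp
      finally show ?thesis .
    qed
    have ox: "(G^^k') a \<le> X" "X \<le> (G^^k') b" using ord_j[of k'] by (auto simp: X_def)
    have bM: "(G^^M) \<beta> \<le> 2 * eps"
      using redM(2) prev lk lstar_le(2) ox Xf by linarith
    have aM: "eps / 2 \<le> (G^^M) \<alpha>"
      using redM(1) Rk lk lstar_le(2) ox Xf by (simp add: X_def)
    have lM: "(G^^M) \<beta> - (G^^M) \<alpha> = (G^^k') b - (G^^k') a" using redM by simp
    have lb: "(G^^M) \<beta> - (G^^M) \<alpha> \<le> beta0" using lM lk lstar_le(1) by simp
    have P1: "(\<Sum>i<M. (G^^i) \<beta> - (G^^i) \<alpha>) \<le> Hc * ((G^^M) \<beta> - (G^^M) \<alpha>)"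
      and P2: "\<beta> - \<alpha> \<le> (G^^M) \<beta> - (G^^M) \<alpha>"
      using PE[OF a0 ab bM aM lb] by auto
    have "(\<Sum>i\<in>{s..<k'}. (G^^i) b - (G^^i) a) = (\<Sum>i\<in>{0..<M}. (G^^(s+i)) b - (G^^(s+i)) a)"
      by (simp add: sum.atLeastLessThan_shift_0[of _ s k'] M_def comp_def)
    also have "\<dots> = (\<Sum>i<M. (G^^i) \<beta> - (G^^i) \<alpha>)"
      using lsum by (simp add: atLeast0LessThan)
    finally have S: "(\<Sum>i\<in>{s..<k'}. (G^^i) b - (G^^i) a) = (\<Sum>i<M. (G^^i) \<beta> - (G^^i) \<alpha>)" .
    have "(G^^s) b - (G^^s) a = \<beta> - \<alpha>" by (simp add: \<alpha>_def \<beta>_def)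
    then show ?thesis using S P1 P2 lM by simp
  qed
  then show "(\<Sum>i\<in>{s..<k'}. (G^^i) b - (G^^i) a) \<le> Hc * ((G^^k') b - (G^^k') a)"
    "(G^^s) b - (G^^s) a \<le> (G^^k') b - (G^^k') a" by auto
qed

lemma Rstep:
  assumes kn: "k < n" and Rk: "eps \<le> frac ((G^^k) x)"
    and sm: "(G^^Suc k) b - (G^^Suc k) a < lam * sig / 2"
  shows "lam * ((G^^k) b - (G^^k) a) \<le> (G^^Suc k) b - (G^^Suc k) a"
proof -
  define X where "X = (G^^k) x"
  define A where "A = (G^^k) a"
  define B where "B = (G^^k) b"
  define m where "m = \<lfloor>X\<rfloor>"
  have Xf: "X = of_int m + frac X" by (simp add: frac_def m_def)
  have Y: "eps \<le> frac X" "frac X \<le> 1 + p" using Rk orb[of k] by (auto simp: X_def)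
  have AXB: "A \<le> X" "X \<le> B" using ord_j[of k] by (auto simp: A_def B_def X_def)
  have s2: "0 < sig / 2" using sig_lam(1) by simp
  have reg: "lam \<le> f \<xi>" if "X - sig/2 \<le> \<xi>" "\<xi> \<le> X + sig/2" for \<xi>
    using f_R[of m \<xi>] that Xf Y by simp
  have GS: "(G^^Suc k) b - (G^^Suc k) a = G B - G A" by (simp add: A_def B_def)
  have c1: "X - A < sig / 2"
  proof (rule ccontr)
    assume "\<not> ?thesis"
    then have Al: "A \<le> X - sig/2" by simp
    obtain \<xi> where xi: "X - sig/2 < \<xi>" "\<xi> < X" "G X - G (X - sig/2) = (X - (X - sig/2)) * f \<xi>"
      using MVT2[of "X - sig/2" X G f] Gd s2 by auto
    have "lam \<le> f \<xi>" using reg xi by simp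
    then have "lam * (sig/2) \<le> (sig/2) * f \<xi>" using s2 by (simp add: mult.commute mult_left_mono)
    then have "lam * (sig/2) \<le> G X - G (X - sig/2)" using xi(3) by simp
    moreover have "G X \<le> G B" "G A \<le> G (X - sig/2)" using AXB Al G_mono by auto
    ultimately have "lam * sig / 2 \<le> G B - G A" by simp
    then show False using sm GS by simp
  qed
  have c2: "B - X < sig / 2"
  proof (rule ccontr)
    assume "\<not> ?thesis"
    then have Bl: "X + sig/2 \<le> B" by simp
    obtain \<xi> where xi: "X < \<xi>" "\<xi> < X + sig/2" "G (X + sig/2) - G X = (X + sig/2 - X) * f \<xi>"
      using MVT2[of X "X + sig/2" G f] Gd s2 by auto
    have "lam \<le> f \<xi>" using reg xi by simp
    then have "lam * (sig/2) \<le> (sig/2) * f \<xi>" using s2 by (simp add: mult.commute mult_left_mono)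
    then have "lam * (sig/2) \<le> G (X + sig/2) - G X" using xi(3) by simp
    moreover have "G (X + sig/2) \<le> G B" "G A \<le> G X" using AXB Bl G_mono by auto
    ultimately have "lam * sig / 2 \<le> G B - G A" by simp
    then show False using sm GS by simp
  qed
  have AB: "A \<le> B" using AXB by simp
  obtain \<xi> where xi: "A \<le> \<xi>" "\<xi> \<le> B" "(G^^1) B - (G^^1) A = Dn 1 \<xi> * (B - A)"
    using MVT_Gn[OF AB, of 1] by blast
  have "lam \<le> f \<xi>" using reg xi c1 c2 by simp
  then have "lam * (B - A) \<le> f \<xi> * (B - A)" using AB by (intro mult_right_mono) auto
  also have "\<dots> = G B - G A" using xi(3) by (simp add: Dn_def)
  finally show ?thesis using GS by (simp add: A_def B_def)
qed


lemma R_induct: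
  assumes "k \<le> n" "eps \<le> frac ((G^^k) x)"
  shows "(G^^k) b - (G^^k) a \<le> 2 * rho \<and>
         (\<Sum>j\<in>{k..<n}. (G^^j) b - (G^^j) a) \<le> Qc * (2 * rho - ((G^^k) b - (G^^k) a))"
  using assms
proof (induction "n - k" arbitrary: k rule: less_induct)
  case less
  show ?case
  proof (cases "k = n")
    case True
    then show ?thesis using an bn by simp
  next
    case False
    then have kn: "k < n" using less.prems by simp
    define P where "P = (\<lambda>j. k < j \<and> eps \<le> frac ((G^^j) x))"
    define k' where "k' = (LEAST j. P j)"
    have Pn: "P n" using kn Rn by (simp add: P_def)
    have Pk': "P k'" unfolding k'_def by (rule LeastI[of P, OF Pn])
    have k'n: "k' \<le> n" unfolding k'_def by (rule Least_le[of P, OF Pn])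
    have kk': "k < k'" "eps \<le> frac ((G^^k') x)" using Pk' by (auto simp: P_def)
    have btw: "frac ((G^^i) x) < eps" if "Suc k \<le> i" "i < k'" for i
    proof -
      have "\<not> P i" using that not_less_Least[of i P] by (simp add: k'_def)
      then show ?thesis using that by (simp add: P_def)
    qed
    have IH: "(G^^k') b - (G^^k') a \<le> 2 * rho \<and>
         (\<Sum>j\<in>{k'..<n}. (G^^j) b - (G^^j) a) \<le> Qc * (2 * rho - ((G^^k') b - (G^^k') a))"
      using less.hyps[of k'] kk' k'n by simp
    define L' where "L' = (G^^k') b - (G^^k') a"
    define Lk where "Lk = (G^^k) b - (G^^k) a"
    define L1 where "L1 = (G^^Suc k) b - (G^^Suc k) a"
    define S1 where "S1 = (\<Sum>j\<in>{Suc k..<k'}. (G^^j) b - (G^^j) a)"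
    define S2 where "S2 = (\<Sum>j\<in>{k'..<n}. (G^^j) b - (G^^j) a)"
    have L'2: "L' \<le> 2 * rho" and S2b: "S2 \<le> Qc * (2 * rho - L')" using IH by (auto simp: L'_def S2_def)
    have L'ls: "L' \<le> lstar" using L'2 rho_l by simp
    have EX: "S1 \<le> Hc * L'" "L1 \<le> L'"
      using excursion[of "Suc k" k', OF _ k'n btw kk'(2)] kk' L'ls
      by (auto simp: S1_def L1_def L'_def)
    have "L1 < lam * sig / 2"
    proof -
      have "sig / 2 < lam * sig / 2" using sig_lam(1,4) by simp
      then show ?thesis using EX(2) L'ls lstar_le(3) by simp
    qed
    then have lamLk: "lam * Lk \<le> L1" using Rstep[OF kn less.prems(2)] by (simp add: Lk_def L1_def)
    have lam1: "lam > 1" by (rule sig_lam(4))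
    have Lk0: "0 \<le> Lk" using ord_j[of k] by (simp add: Lk_def)
    have Lkb: "Lk \<le> L' / lam" using lamLk EX(2) lam1 by (simp add: pos_le_divide_eq mult.commute)
    have L'0: "0 \<le> L'" using ord_j[of k'] by (simp add: L'_def)
    have "L' / lam \<le> L'" using L'0 lam1 by (simp add: divide_le_eq mult_le_cancel_left1)
    then have Lk2: "Lk \<le> 2 * rho" using Lkb L'2 by simp
    have split: "(\<Sum>j\<in>{k..<n}. (G^^j) b - (G^^j) a) = Lk + S1 + S2"
    proof -
      have "(\<Sum>j\<in>{k..<n}. (G^^j) b - (G^^j) a) = ((G^^k) b - (G^^k) a)
            + (\<Sum>j\<in>{Suc k..<n}. (G^^j) b - (G^^j) a)"
        using kn by (rule sum.atLeast_Suc_lessThan)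
      also have "(\<Sum>j\<in>{Suc k..<n}. (G^^j) b - (G^^j) a) = S1 + S2"
        unfolding S1_def S2_def using kk' k'n by (simp add: sum.atLeastLessThan_concat)
      finally show ?thesis by (simp add: Lk_def)
    qed
    have Hc_eq: "Hc = Qc - (1 + Qc) / lam"
      using Qc_eq lam1 by (simp add: field_simps)
    have mono1: "(1 + Qc) * Lk \<le> (1 + Qc) * (L' / lam)"
      using Lkb Qc_pos by (intro mult_left_mono) auto
    have "Lk + S1 + S2 \<le> Lk + Hc * L' + Qc * (2 * rho - L')" using EX(1) S2b by linarith
    also have "\<dots> = Qc * (2 * rho - Lk) + ((1 + Qc) * Lk - (1 + Qc) * (L' / lam))"
      unfolding Hc_eq using lam1 by (simp add: field_simps)
    also have "\<dots> \<le> Qc * (2 * rho - Lk)" using mono1 by simp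
    finally have "Lk + S1 + S2 \<le> Qc * (2 * rho - Lk)" .
    then show ?thesis using split Lk2 by (simp add: Lk_def)
  qed
qed

lemma total_sum: "(\<Sum>j<n. (G^^j) b - (G^^j) a) \<le> 2 * rho * (Hc + Qc)"
proof -
  define P where "P = (\<lambda>j. eps \<le> frac ((G^^j) x))"
  define r where "r = (LEAST j. P j)"
  have Pn: "P n" using Rn by (simp add: P_def)
  have Pr: "P r" unfolding r_def by (rule LeastI[of P, OF Pn])
  have rn: "r \<le> n" unfolding r_def by (rule Least_le[of P, OF Pn])
  have btw: "frac ((G^^i) x) < eps" if "0 \<le> i" "i < r" for i
  proof -
    have "\<not> P i" using that not_less_Least[of i P] by (simp add: r_def)
    then show ?thesis by (simp add: P_def)
  qed
  have RI: "(G^^r) b - (G^^r) a \<le> 2 * rho \<and>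
         (\<Sum>j\<in>{r..<n}. (G^^j) b - (G^^j) a) \<le> Qc * (2 * rho - ((G^^r) b - (G^^r) a))"
    using R_induct[OF rn] Pr by (simp add: P_def)
  define Lr where "Lr = (G^^r) b - (G^^r) a"
  have Lr0: "0 \<le> Lr" using ord_j[of r] by (simp add: Lr_def)
  have Lrl: "Lr \<le> lstar" using RI rho_l by (simp add: Lr_def)
  have E1: "(\<Sum>i\<in>{0..<r}. (G^^i) b - (G^^i) a) \<le> Hc * Lr"
    using excursion(1)[of 0 r, OF _ rn btw] Pr Lrl by (simp add: P_def Lr_def)
  have "(\<Sum>j<n. (G^^j) b - (G^^j) a) = (\<Sum>j\<in>{0..<r}. (G^^j) b - (G^^j) a) + (\<Sum>j\<in>{r..<n}. (G^^j) b - (G^^j) a)"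
    using rn by (simp add: sum.atLeastLessThan_concat atLeast0LessThan[symmetric])
  also have "\<dots> \<le> Hc * Lr + Qc * (2 * rho - Lr)" using E1 RI by (simp add: Lr_def)
  also have "\<dots> \<le> Hc * (2 * rho) + Qc * (2 * rho)"
  proof -
    have "Hc * Lr \<le> Hc * (2 * rho)" using Hc_pos RI by (intro mult_left_mono) (auto simp: Lr_def)
    moreover have "Qc * (2 * rho - Lr) \<le> Qc * (2 * rho)" using Qc_pos Lr0 by (intro mult_left_mono) auto
    ultimately show ?thesis by simp
  qed
  finally show ?thesis by (simp add: algebra_simps)
qed


lemma dist_ab: assumes "a \<le> s" "s \<le> b" "a \<le> t" "t \<le> b" shows "Dn n s \<le> Edist * Dn n t"
proof -
  have "Dn n s \<le> exp (Lc * (\<Sum>j<n. (G^^j) b - (G^^j) a)) * Dn n t" by (rule distortion[OF assms])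
  also have "exp (Lc * (\<Sum>j<n. (G^^j) b - (G^^j) a)) \<le> Edist"
    unfolding Edist_def using total_sum Lc(1) by (simp add: mult_left_mono)
  then have "exp (Lc * (\<Sum>j<n. (G^^j) b - (G^^j) a)) * Dn n t \<le> Edist * Dn n t"
    using Dn_pos[of n t] by (intro mult_right_mono) auto
  finally show ?thesis .
qed

lemma len_ab: "(b - a) * Dn n x \<le> 2 * rho * Edist"
proof -
  have ab: "a \<le> b" using ax_lt by simp
  obtain \<xi> where xi: "a \<le> \<xi>" "\<xi> \<le> b" "(G^^n) b - (G^^n) a = Dn n \<xi> * (b - a)"
    using MVT_Gn[OF ab, of n] by blast
  have "Dn n x \<le> Edist * Dn n \<xi>" using dist_ab[of x \<xi>] xi ax_lt by simp
  then have "(b - a) * Dn n x \<le> (b - a) * (Edist * Dn n \<xi>)" using ab by (intro mult_left_mono) auto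
  also have "\<dots> = Edist * (Dn n \<xi> * (b - a))" by (simp add: algebra_simps)
  also have "\<dots> = Edist * (2 * rho)" using xi(3) an bn by simp
  finally show ?thesis by (simp add: algebra_simps)
qed

lemma meas_ab: "ennreal eta \<le> ennreal (Edist * Dn n x) * emeasure lborel (Oset \<inter> {a..b})"
proof -
  have ab: "a \<le> b" using ax_lt by simp
  define X where "X = (G^^n) x"
  have Xf: "X = of_int \<lfloor>X\<rfloor> + frac X" by (simp add: frac_def)
  have c: "eps \<le> frac X" "frac X \<le> 1 + p" using Rn orb[of n] by (auto simp: X_def)
  have "ennreal eta \<le> emeasure lborel (Oset \<inter> {of_int \<lfloor>X\<rfloor> + frac X - rho .. of_int \<lfloor>X\<rfloor> + frac X + rho})"
    by (rule eta(2)[OF c])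
  also have "{of_int \<lfloor>X\<rfloor> + frac X - rho .. of_int \<lfloor>X\<rfloor> + frac X + rho} = {(G^^n) a .. (G^^n) b}"
    using an bn Xf by (simp add: X_def)
  also have "emeasure lborel (Oset \<inter> {(G^^n) a .. (G^^n) b}) \<le> ennreal (Edist * Dn n x) * emeasure lborel (Oset \<inter> {a..b})"
  proof (rule subst_bound[OF ab Oset_borel])
    show "\<And>t. (G^^n) t \<in> Oset \<Longrightarrow> t \<in> Oset" by (rule Oset_back)
    show "\<And>t. a \<le> t \<Longrightarrow> t \<le> b \<Longrightarrow> Dn n t \<le> Edist * Dn n x"
      using dist_ab ax_lt by (meson less_imp_le)
  qed
  finally show ?thesis .
qed

end


lemma infinitely_R:
  assumes orb: "\<And>k. 0 < frac ((G^^k) x) \<and> frac ((G^^k) x) \<le> 1 + p"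
  shows "\<exists>n\<ge>N. eps \<le> frac ((G^^n) x)"
proof (rule ccontr)
  assume "\<not> ?thesis"
  then have lt: "\<And>n. n \<ge> N \<Longrightarrow> frac ((G^^n) x) < eps" by (meson not_le)
  define y where "y = frac ((G^^N) x)"
  have it: "frac ((G^^(N + i)) x) = (G^^i) y" for i
  proof (induction i)
    case 0 then show ?case by (simp add: y_def)
  next
    case (Suc i)
    have h: "0 < frac ((G^^(N+i)) x)" "frac ((G^^(N+i)) x) < eps" using orb lt[of "N+i"] by auto
    have "frac ((G^^(N + Suc i)) x) = frac (G ((G^^(N+i)) x))" by simp
    also have "\<dots> = G (frac ((G^^(N+i)) x))" by (rule exc_step(2)[OF h])
    finally show ?case using Suc by simp
  qed
  have "0 < y" using orb by (simp add: y_def)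
  moreover have "\<And>i. (G^^i) y \<le> e0"
  proof -
    fix i
    have "(G^^i) y < eps" using it[of i] lt[of "N+i"] by simp
    then show "(G^^i) y \<le> e0" using eps_e0 eps_pos by simp
  qed
  ultimately show False by (rule no_stay_right)
qed

lemma Dn_orbit_mono:
  assumes orb: "\<And>k. 0 < frac ((G^^k) x) \<and> frac ((G^^k) x) \<le> 1 + p"
  shows "m \<le> n \<Longrightarrow> Dn m x \<le> Dn n x"
proof (induction n)
  case 0 then show ?case by simp
next
  case (Suc n)
  show ?case
  proof (cases "m = Suc n")
    case True then show ?thesis by simp
  next
    case False
    then have "m \<le> n" using Suc.prems by simp
    then have "Dn m x \<le> Dn n x" using Suc.IH by simp
    also have "Dn n x \<le> Dn n x * f ((G^^n) x)"
      using f_ge1_frac[of "(G^^n) x"] orb[of n] Dn_pos[of n x] by (simp add: mult_le_cancel_left1)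
    finally show ?thesis by (simp add: Dn_Suc)
  qed
qed

lemma Dn_grow:
  assumes orb: "\<And>k. 0 < frac ((G^^k) x) \<and> frac ((G^^k) x) \<le> 1 + p"
  shows "\<exists>n. eps \<le> frac ((G^^n) x) \<and> lam ^ K \<le> Dn n x"
proof (induction K)
  case 0
  obtain n where n: "eps \<le> frac ((G^^n) x)" using infinitely_R[OF orb, of 0] by blast
  have "Dn 0 x \<le> Dn n x" using Dn_orbit_mono[OF orb] by simp
  then show ?case using n by (intro exI[of _ n]) (simp add: Dn_def)
next
  case (Suc K)
  obtain n where n: "eps \<le> frac ((G^^n) x)" "lam ^ K \<le> Dn n x" using Suc by blast
  define X where "X = (G^^n) x"
  have Xf: "X = of_int \<lfloor>X\<rfloor> + frac X" by (simp add: frac_def)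
  have "lam \<le> f X"
    using f_R[of "\<lfloor>X\<rfloor>" X] n(1) orb[of n] Xf sig_lam(1) by (simp add: X_def)
  then have "lam ^ K * lam \<le> Dn n x * f X"
    using n(2) sig_lam(4) Dn_pos[of n x] by (intro mult_mono) auto
  then have 1: "lam ^ Suc K \<le> Dn (Suc n) x" by (simp add: Dn_Suc X_def mult.commute)
  obtain n' where n': "n' \<ge> Suc n" "eps \<le> frac ((G^^n') x)" using infinitely_R[OF orb, of "Suc n"] by blast
  have "Dn (Suc n) x \<le> Dn n' x" using Dn_orbit_mono[OF orb n'(1)] .
  then show ?case using 1 n' by (intro exI[of _ n']) auto
qed

definition cst :: real where "cst = min (eta / (2 * rho * Edist^2)) 1"
definition thc :: real where "thc = 1 - cst / 4"

lemma cst_pos: "0 < cst" "cst \<le> 1"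
  using eta(1) rho_pos Edist_pos by (auto simp: cst_def)

lemma thc: "0 \<le> thc" "thc < 1"
  using cst_pos by (auto simp: thc_def)

lemma point_density:
  assumes orb: "\<And>k. 0 < frac ((G^^k) x) \<and> frac ((G^^k) x) \<le> 1 + p" and r0: "0 < r0"
  shows "\<exists>r. 0 < r \<and> r < r0 \<and> emeasure lborel ((- Oset) \<inter> ball x r) \<le> ennreal thc * emeasure lborel (ball x r)"
proof -
  have y0: "0 < 4 * rho * Edist / r0" using rho_pos Edist_pos r0 by simp
  obtain K where K: "4 * rho * Edist / r0 < lam ^ K" using real_arch_pow[OF sig_lam(4)] by blast
  obtain n where n: "eps \<le> frac ((G^^n) x)" "lam ^ K \<le> Dn n x" using Dn_grow[OF orb] by blast
  obtain a where an: "(G^^n) a = (G^^n) x - rho" using Gn_surj by blast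
  obtain b where bn: "(G^^n) b = (G^^n) x + rho" using Gn_surj by blast
  note ctx = orb n(1) an bn
  have ab: "a < x" "x < b" using ax_lt[OF ctx] by auto
  have len: "(b - a) * Dn n x \<le> 2 * rho * Edist" by (rule len_ab[OF ctx])
  have ms: "ennreal eta \<le> ennreal (Edist * Dn n x) * emeasure lborel (Oset \<inter> {a..b})" by (rule meas_ab[OF ctx])
  define r where "r = 2 * (b - a)"
  have rpos: "0 < r" using ab by (simp add: r_def)
  have Dpos: "0 < Dn n x" by (rule Dn_pos)
  have "r * Dn n x = 2 * ((b - a) * Dn n x)" by (simp add: r_def)
  then have "r * Dn n x \<le> 4 * rho * Edist" using len by linarith
  moreover have "4 * rho * Edist < r0 * lam ^ K" using K r0 by (simp add: pos_divide_less_eq mult.commute)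
  moreover have "r0 * lam ^ K \<le> r0 * Dn n x" using n(2) r0 by simp
  ultimately have "r * Dn n x < r0 * Dn n x" by linarith
  then have rr0: "r < r0" using Dpos by simp
  have sub: "{a..b} \<subseteq> ball x r"
  proof
    fix t assume "t \<in> {a..b}"
    then have "\<bar>t - x\<bar> < r" using ab by (auto simp: r_def abs_le_iff)
    then show "t \<in> ball x r" by (simp add: dist_real_def abs_minus_commute)
  qed
  define S where "S = Oset \<inter> {a..b}"
  have Sb: "S \<in> sets borel" using Oset_borel by (simp add: S_def)
  have Sfin: "emeasure lborel S \<noteq> \<infinity>"
  proof -
    have "emeasure lborel S \<le> emeasure lborel {a..b}" by (rule emeasure_mono) (auto simp: S_def)
    then show ?thesis using ab by (auto simp: top_unique)
  qed
  define mS where "mS = measure lborel S"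
  have Sm: "emeasure lborel S = ennreal mS" unfolding mS_def
    using Sfin emeasure_eq_ennreal_measure[of lborel S] by (metis infinity_ennreal_def)
  have mS0: "0 \<le> mS" by (simp add: mS_def)
  have em: "ennreal (Edist * Dn n x * mS) = ennreal (Edist * Dn n x) * ennreal mS"
    using Edist_pos Dpos mS0 by (simp add: ennreal_mult)
  have "ennreal eta \<le> ennreal (Edist * Dn n x * mS)"
    unfolding em using ms Sm by (simp add: S_def)
  then have etaS: "eta \<le> Edist * Dn n x * mS" using Edist_pos Dpos mS0 by (simp add: ennreal_le_iff)
  have lower: "cst * (b - a) \<le> mS"
  proof -
    define E where "E = Edist"
    define D where "D = Dn n x"
    have E0: "0 < E" using Edist_pos by (simp add: E_def)
    have ba0: "0 \<le> b - a" using ab by simp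
    have c1: "cst * (b - a) \<le> eta / (2 * rho * E^2) * (b - a)"
      using ba0 by (intro mult_right_mono) (auto simp: cst_def E_def)
    have c2: "eta * (b - a) \<le> (E * D * mS) * (b - a)"
      using etaS ba0 by (intro mult_right_mono) (auto simp: E_def D_def)
    have c3: "(E * D * mS) * (b - a) = (E * mS) * ((b - a) * D)" by (simp add: algebra_simps)
    have c4: "(E * mS) * ((b - a) * D) \<le> (E * mS) * (2 * rho * E)"
      using len E0 mS0 by (intro mult_left_mono) (auto simp: E_def D_def)
    have "eta * (b - a) \<le> mS * (2 * rho * E^2)"
      using c2 c3 c4 by (simp add: power2_eq_square algebra_simps)
    then have "eta / (2 * rho * E^2) * (b - a) \<le> mS"
      using rho_pos E0 by (simp add: pos_divide_le_eq mult.commute mult.left_commute)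
    then show ?thesis using c1 by linarith
  qed
  have ball_m: "emeasure lborel (ball x r) = ennreal (2 * r)"
    using rpos by (simp add: ball_eq_greaterThanLessThan)
  have "(- Oset) \<inter> ball x r \<subseteq> ball x r - S" by (auto simp: S_def)
  then have "emeasure lborel ((- Oset) \<inter> ball x r) \<le> emeasure lborel (ball x r - S)"
    by (rule emeasure_mono) (use Sb in auto)
  also have "\<dots> = emeasure lborel (ball x r) - emeasure lborel S"
    by (rule emeasure_Diff) (use Sfin Sb sub in \<open>auto simp: S_def\<close>)
  also have "\<dots> = ennreal (2 * r - mS)" using ball_m Sm mS0 by (simp add: ennreal_minus)
  also have "\<dots> \<le> ennreal (thc * (2 * r))"
  proof (rule ennreal_leI)
    have "cst / 4 * (2 * r) = cst * (b - a)" by (simp add: r_def)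
    then show "2 * r - mS \<le> thc * (2 * r)" using lower by (simp add: thc_def algebra_simps)
  qed
  also have "\<dots> = ennreal thc * emeasure lborel (ball x r)"
    using ball_m thc(1) rpos by (simp add: ennreal_mult)
  finally show ?thesis using rpos rr0 by blast
qed


definition Zp :: "real set" where "Zp = {z. \<exists>k. (G^^k) z \<in> \<int>}"

lemma Zp_countable: "countable Zp"
proof -
  have inj: "inj (G^^k)" for k
  proof (rule injI)
    fix u v assume e: "(G^^k) u = (G^^k) v"
    show "u = v"
    proof (rule ccontr)
      assume "u \<noteq> v"
      then consider "u < v" | "v < u" by linarith
      then show False
      proof cases
        case 1 then show False using Gn_strict[OF 1, of k] e by simp
      next
        case 2 then show False using Gn_strict[OF 2, of k] e by simp
      qed
    qed
  qed
  have "Zp = (\<Union>k. \<Union>m::int. (G^^k) -` {of_int m})"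
  proof (rule set_eqI, rule iffI)
    fix z assume "z \<in> Zp"
    then obtain k where "(G^^k) z \<in> \<int>" by (auto simp: Zp_def)
    then obtain m :: int where "(G^^k) z = of_int m" by (rule Ints_cases)
    then show "z \<in> (\<Union>k. \<Union>m::int. (G^^k) -` {of_int m})" by blast
  next
    fix z assume "z \<in> (\<Union>k. \<Union>m::int. (G^^k) -` {of_int m})"
    then obtain k and m :: int where "(G^^k) z = of_int m" by blast
    then have "(G^^k) z \<in> \<int>" by simp
    then show "z \<in> Zp" by (auto simp: Zp_def)
  qed
  moreover have "countable ((G^^k) -` {of_int m})" for k and m :: int
    using finite_vimageI[OF _ inj[of k], of "{of_int m}"] by (simp add: countable_finite)
  ultimately show ?thesis by auto
qed

lemma orbit_cond:
  assumes "x \<notin> Oset" "x \<notin> Zp"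
  shows "0 < frac ((G^^k) x) \<and> frac ((G^^k) x) \<le> 1 + p"
proof
  define X where "X = (G^^k) x"
  have nz: "X \<notin> \<int>" using assms(2) by (auto simp: Zp_def X_def)
  then have "frac X \<noteq> 0" by simp
  then show "0 < frac ((G^^k) x)" using frac_ge_0[of X] by (simp add: X_def)
  show "frac ((G^^k) x) \<le> 1 + p"
  proof (rule ccontr)
    assume "\<not> ?thesis"
    then have h: "1 + p < frac X" by (simp add: X_def)
    have "X \<in> {of_int (\<lfloor>X\<rfloor> + 1) + p <..< of_int (\<lfloor>X\<rfloor> + 1)}"
      using h frac_lt_1[of X] by (simp add: frac_def)
    then have "X \<in> Uset" unfolding Uset_def by (rule UN_I[OF UNIV_I])
    then have "x \<in> Oset" unfolding Oset_def X_def by blast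
    then show False using assms(1) by simp
  qed
qed

theorem core_null: "(- Oset) \<in> null_sets lborel"
proof (rule density_null[OF _ Zp_countable thc])
  show "- Oset \<in> sets borel" using Oset_open by (simp add: borel_closed open_closed[symmetric])
  fix x r0 :: real assume a: "x \<in> - Oset" "x \<notin> Zp" "0 < r0"
  have orb: "\<And>k. 0 < frac ((G^^k) x) \<and> frac ((G^^k) x) \<le> 1 + p"
    using orbit_cond a by simp
  show "\<exists>r. 0 < r \<and> r < r0 \<and> emeasure lborel (- Oset \<inter> ball x r) \<le> ennreal thc * emeasure lborel (ball x r)"
    using point_density[OF orb a(3)] by simp
qed

end

context cm
begin

lemma main_G:
  assumes ex: "\<And>x. (\<forall>n::int. x - of_int n \<notin> W0_lift G) \<Longrightarrow> f x > 1"
  shows "{0..<1} - B \<in> null_sets lborel"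
proof (cases "{0..<1} \<subseteq> B")
  case True
  then have e: "{0..<1} - B = {}" by blast
  show ?thesis unfolding e by simp
next
  case False
  then obtain z0 where z: "z0 \<in> {0..<1}" "z0 \<notin> B" unfolding subset_eq by blast
  then have z0: "0 \<le> z0" "z0 < 1" "z0 \<notin> B" by auto
  define W where "W = W0_lift G"
  have WB: "W \<subseteq> B" unfolding W_def W0_lift_def by (rule connected_component_subset)
  have B0: "0 \<in> B" using B_int[of 0] by simp
  have W0: "0 \<in> W" unfolding W_def W0_lift_def using connected_component_refl[OF B0] by simp
  have Wc: "connected W" unfolding W_def W0_lift_def by simp
  have Wi: "\<And>a b t. a \<in> W \<Longrightarrow> b \<in> W \<Longrightarrow> a \<le> t \<Longrightarrow> t \<le> b \<Longrightarrow> t \<in> W"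
    using Wc is_interval_connected_1 is_interval_1 by blast
  have Wmax: "T \<subseteq> W" if "0 \<in> T" "connected T" "T \<subseteq> B" for T
    unfolding W_def W0_lift_def by (rule connected_component_maximal[OF that])
  have Wl: "-e0 \<in> W"
  proof -
    have "{-e0..0} \<subseteq> W" by (rule Wmax) (use e0_pos B_left in auto)
    then show ?thesis using e0_pos by auto
  qed
  have W1: "-1 < w" if "w \<in> W" for w
  proof (rule ccontr)
    assume "\<not> -1 < w"
    then have "z0 - 1 \<in> W" using Wi[OF that W0, of "z0 - 1"] z0 by simp
    then have "z0 - 1 \<in> B" using WB by blast
    then have "(z0 - 1) + of_int 1 \<in> B" by (rule B_shift)
    then show False using z0 by simp
  qed
  have W2: "w \<le> 0" if "w \<in> W" for w
  proof (rule ccontr)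
    assume "\<not> w \<le> 0"
    then have w0: "0 < w" by simp
    have "{0..w} \<subseteq> W" using Wi[OF W0 that] by auto
    then have "{0..w} \<subseteq> B" using WB by blast
    then show False using no_right[OF ex z0 w0] by (simp add: W_def)
  qed
  have Wne: "W \<noteq> {}" using W0 by blast
  have Wbd: "bdd_below W" using W1 by (intro bdd_belowI[of _ "-1"]) (auto intro: less_imp_le)
  define p where "p = Inf W"
  have pW: "p \<le> w" if "w \<in> W" for w unfolding p_def by (rule cInf_lower[OF that Wbd])
  have p1: "-1 \<le> p" unfolding p_def by (rule cInf_greatest[OF Wne]) (use W1 in \<open>auto intro: less_imp_le\<close>)
  have pe: "p \<le> -e0" using pW[OF Wl] .
  have GW: "G ` W \<subseteq> W"
  proof (rule Wmax)
    show "0 \<in> G ` W" using W0 G0 by (metis image_eqI)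
    show "connected (G ` W)"
      by (rule connected_continuous_image[OF _ Wc]) (simp add: continuous_at_imp_continuous_on G_isCont)
    show "G ` W \<subseteq> B" using WB B_G by blast
  qed
  have pnW: "p \<notin> W"
  proof
    assume pin: "p \<in> W"
    have pm1: "-1 < p" using W1[OF pin] .
    have p0: "p < 0" using pe e0_pos by simp
    have Gp: "G p \<in> W" using GW pin by blast
    have Gp0: "G p \<le> 0" using W2[OF Gp] .
    have "p \<le> G p" using pW[OF Gp] .
    moreover have "G p \<noteq> p"
    proof
      assume fx: "G p = p"
      have "p \<notin> \<int>"
      proof
        assume "p \<in> \<int>" then obtain k :: int where k: "p = of_int k" by (rule Ints_cases)
        have "(-1::real) < of_int k" "of_int k < (0::real)" using k pm1 p0 by auto
        then have "-1 < k" "k < 0" by simp_all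
        then show False by simp
      qed
      then have "p \<notin> B" by (rule B_fixed[OF fx])
      then show False using pin WB by blast
    qed
    ultimately have pG: "p < G p" by simp
    define E where "E = G p - p"
    have E0: "E > 0" using pG by (simp add: E_def)
    obtain \<delta> where d: "\<delta> > 0" "\<And>t. \<bar>t - p\<bar> < \<delta> \<Longrightarrow> \<bar>G t - G p\<bar> < E"
      using isCont_eps[OF G_isCont[of p] E0] by auto
    define t where "t = p - \<delta> / 2"
    have tp: "t < p" "\<bar>t - p\<bar> < \<delta>" using d(1) by (auto simp: t_def)
    have Gt: "p < G t" using d(2)[OF tp(2)] abs_ge_minus_self[of "G t - G p"] by (simp add: E_def)
    have "{t..0} \<subseteq> B"
    proof
      fix u assume u: "u \<in> {t..0}"
      show "u \<in> B"
      proof (cases "u < p")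
        case True
        have "G t \<le> G u" "G u \<le> G p" using u True G_mono by auto
        then have "G u \<in> W" using Wi[OF pin W0, of "G u"] Gt Gp0 by simp
        then show ?thesis using WB B_G by blast
      next
        case False
        then show ?thesis using Wi[OF pin W0, of u] u WB by auto
      qed
    qed
    then have "{t..0} \<subseteq> W" using tp d(1) p0 by (intro Wmax) auto
    then have "t \<in> W" using tp p0 by auto
    then show False using pW tp by fastforce
  qed
  have Weq: "W = {p<..0}"
  proof (rule set_eqI, rule iffI)
    fix w assume w: "w \<in> W"
    have "p \<le> w" using pW[OF w] .
    moreover have "w \<noteq> p" using w pnW by blast
    ultimately show "w \<in> {p<..0}" using W2[OF w] by simp
  next
    fix u assume u: "u \<in> {p<..0}"
    then obtain w where "w \<in> W" "w < u" using cInf_less_iff[OF Wne Wbd] by (auto simp: p_def)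
    then show "u \<in> W" using Wi[OF _ W0, of w u] u by simp
  qed
  have pm1: "-1 < p"
  proof (rule ccontr)
    assume "\<not> -1 < p"
    then have pp: "p = -1" using p1 by simp
    show False
    proof (cases "z0 = 0")
      case True then show False using B0 z0 by simp
    next
      case False
      then have "z0 - 1 \<in> W" using Weq pp z0 by simp
      then have "(z0 - 1) + of_int 1 \<in> B" using WB B_shift by blast
      then show False using z0 by simp
    qed
  qed
  have p0: "p < 0" using pe e0_pos by simp
  interpret c2: cm2 G f f2 d p
  proof unfold_locales
    show "-1 < p" by (rule pm1)
    show "p < 0" by (rule p0)
    fix x assume "\<forall>n::int. x - of_int n \<notin> {p<..0}"
    then have "\<forall>n::int. x - of_int n \<notin> W0_lift G" using Weq by (simp add: W_def)
    then show "f x > 1" by (rule ex)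
  qed
  have sub: "{0..<1} - B \<subseteq> - c2.Oset"
  proof
    fix z assume z: "z \<in> {0..<1} - B"
    show "z \<in> - c2.Oset"
    proof
      assume "z \<in> c2.Oset"
      then obtain k where "(G^^k) z \<in> c2.Uset" by (auto simp: c2.Oset_def)
      then obtain m :: int where m: "(G^^k) z \<in> {of_int m + p <..< of_int m}"
        unfolding c2.Uset_def by blast
      then have "(G^^k) z - of_int m \<in> W" using Weq by auto
      then have "((G^^k) z - of_int m) + of_int m \<in> B" using WB B_shift by blast
      then have "(G^^k) z \<in> B" by simp
      then have "z \<in> B" using B_Gn by blast
      then show False using z by simp
    qed
  qed
  have meas: "{0..<1} - B \<in> sets lborel" using B_borel by simp
  show ?thesis by (rule null_sets_subset[OF c2.core_null meas sub])
qed

end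


theorem theorem2p1:
  fixes F F1 F2 :: "real \<Rightarrow> real" and d :: int
  assumes lift: "\<And>x. F (x + 1) = F x + of_int d"
    and deriv1: "\<And>x. (F has_real_derivative F1 x) (at x)"
    and deriv2: "\<And>x. (F1 has_real_derivative F2 x) (at x)"
    and C2: "continuous_on UNIV F2"
    and local_diffeo: "\<And>x. F1 x \<noteq> 0"
    and fixed0: "F 0 \<in> \<int>"
    and sn1: "F1 0 = 1"
    and sn2: "F2 0 > 0"
    and unique_sn: "\<And>x. F x - x \<in> \<int> \<Longrightarrow> F1 x = 1 \<Longrightarrow> F2 x > 0 \<Longrightarrow> x \<in> \<int>"
    and expanding: "\<And>x. (\<forall>n::int. x - of_int n \<notin> W0_lift F) \<Longrightarrow> \<bar>F1 x\<bar> > 1"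
  shows "{0..<1} - basin0_lift F \<in> null_sets lborel"
proof -
  have F1c: "isCont F1 x" for x using deriv2 DERIV_isCont by blast
  have F1c': "continuous_on S F1" for S using F1c by (simp add: continuous_at_imp_continuous_on)
  have F1pos: "F1 x > 0" for x
  proof (rule ccontr)
    assume "\<not> F1 x > 0"
    then have neg: "F1 x < 0" using local_diffeo[of x] by simp
    show False
    proof (cases "0 \<le> x")
      case True
      obtain \<xi> where "0 \<le> \<xi>" "\<xi> \<le> x" "F1 \<xi> = 0"
        using IVT2'[of F1 x 0 0, OF _ _ True F1c'] neg sn1 by auto
      then show False using local_diffeo by blast
    next
      case False
      then have x0: "x \<le> 0" by simp
      obtain \<xi> where "x \<le> \<xi>" "\<xi> \<le> 0" "F1 \<xi> = 0"
        using IVT'[of F1 x 0 0, OF _ _ x0 F1c'] neg sn1 by auto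
      then show False using local_diffeo by blast
    qed
  qed
  define G where "G x = F x - F 0" for x
  have Gd: "(G has_real_derivative F1 x) (at x)" for x
    unfolding G_def using deriv1[of x] by (auto intro!: derivative_eq_intros)
  interpret c: cm G F1 F2 d
  proof unfold_locales
    show "\<And>x. G (x + 1) = G x + of_int d" using lift by (simp add: G_def)
    show "\<And>x. (G has_real_derivative F1 x) (at x)" by (rule Gd)
    show "\<And>x. (F1 has_real_derivative F2 x) (at x)" by (rule deriv2)
    show "continuous_on UNIV F2" by (rule C2)
    show "\<And>x. F1 x > 0" by (rule F1pos)
    show "G 0 = 0" by (simp add: G_def)
    show "F1 0 = 1" by (rule sn1)
    show "F2 0 > 0" by (rule sn2)
  qed
  obtain k0 :: int where k0: "F 0 = of_int k0" using fixed0 by (rule Ints_cases)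
  have F_shift: "F (y + of_int j) = F y + of_int j * of_int d" for y j
    using c.G_shift[of y j] by (simp add: G_def)
  have Fk: "\<exists>j::int. (F^^k) x = (G^^k) x + of_int j" for k x
  proof (induction k)
    case 0 then show ?case by (intro exI[of _ 0]) simp
  next
    case (Suc k)
    then obtain j :: int where j: "(F^^k) x = (G^^k) x + of_int j" by blast
    have "(F^^Suc k) x = F ((G^^k) x + of_int j)" using j by simp
    also have "\<dots> = F ((G^^k) x) + of_int j * of_int d" by (rule F_shift)
    also have "\<dots> = G ((G^^k) x) + of_int (k0 + j * d)" using k0 by (simp add: G_def)
    finally show ?case by (intro exI[of _ "k0 + j * d"]) simp
  qed
  have circ_eq: "circ_dist0 ((F^^k) x) = circ_dist0 ((G^^k) x)" for k x
  proof -
    obtain j :: int where "(F^^k) x = (G^^k) x + of_int j" using Fk by blast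
    then show ?thesis by (simp add: circ_shift)
  qed
  have Beq: "basin0_lift F = basin0_lift G"
    unfolding basin0_lift_def circ_eq ..
  have Weq: "W0_lift F = W0_lift G"
    unfolding W0_lift_def Beq ..
  have ex: "F1 x > 1" if "\<forall>n::int. x - of_int n \<notin> W0_lift G" for x
  proof -
    have "\<bar>F1 x\<bar> > 1" using expanding[of x] that Weq by simp
    then show ?thesis using F1pos[of x] by simp
  qed
  show ?thesis unfolding Beq by (rule c.main_G[OF ex])
qed

end
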